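(* Fix integers $n,k\ge1$ and a positive integer $b$ coprime with $n$, and let $E=\mathbb Z[q]/(\Phi_n(q)^k)$. The algebra map $\mathbb Z[q]\to\mathbb Z[q]$, $q\mapsto q^b$, descends to an algebra endomorphism $F_b:E\to E$. The image $F_b(E)$ is a free $\mathbb Z$-submodule of $E$ of rank equal to $\operatorname{rk}(E)$, and its index in $E$ is $b^{k(k-1)\varphi(n)/2}$.
   Context: $\Phi_n(q)$ is the $n$th cyclotomic polynomial and $\varphi$ is Euler's totient function. *)

theory Defs
  imports "HOL-Computational_Algebra.Polynomial" "HOL-Number_Theory.Totient" Complex_Main
begin

definition cyclo :: "nat \<Rightarrow> int poly" where
  "cyclo n = (THE p. map_poly of_int p =
      (\<Prod>j\<in>{j. j < n \<and> coprime j n}. [:- cis (2 * pi * real j / real n), 1:]))"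

definition frob :: "nat \<Rightarrow> int poly \<Rightarrow> int poly" where
  "frob b p = pcompose p (monom 1 b)"

text \<open>For an additive subgroup S of Z[q] containing the ideal (M), the list vs gives a
  Z-basis of the Z-module S/(M): every element of S is congruent mod M to a unique
  integer combination of vs (and all vs lie in S).\<close>
definition quot_Z_basis :: "int poly \<Rightarrow> int poly set \<Rightarrow> int poly list \<Rightarrow> bool" where
  "quot_Z_basis M S vs \<longleftrightarrow> set vs \<subseteq> S \<and>
     (\<forall>x\<in>S. \<exists>!c::int list. length c = length vs \<and>
        M dvd (x - (\<Sum>i<length vs. smult (c ! i) (vs ! i))))"

end

theory Submission
  imports Defs "Jordan_Normal_Form.Char_Poly" "Jordan_Normal_Form.Column_Operations"
begin

definition lat :: "int mat \<Rightarrow> int vec set" where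
  "lat A = {A *\<^sub>v c | c. c \<in> carrier_vec (dim_col A)}"

definition reps :: "nat \<Rightarrow> int mat \<Rightarrow> int vec set \<Rightarrow> bool" where
  "reps n A R \<longleftrightarrow> R \<subseteq> carrier_vec n \<and> (\<forall>v\<in>carrier_vec n. \<exists>r\<in>R. v - r \<in> lat A)
     \<and> (\<forall>r1\<in>R. \<forall>r2\<in>R. r1 - r2 \<in> lat A \<longrightarrow> r1 = r2)"

lemma lat_carrier: "A \<in> carrier_mat n m \<Longrightarrow> x \<in> lat A \<Longrightarrow> x \<in> carrier_vec n"
  unfolding lat_def by auto

lemma lat_diff: assumes A: "A \<in> carrier_mat n m" and "x \<in> lat A" "y \<in> lat A"
  shows "x - y \<in> lat A"
proof -
  from assms obtain c d where c: "c \<in> carrier_vec m" "x = A *\<^sub>v c"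
    and d: "d \<in> carrier_vec m" "y = A *\<^sub>v d" unfolding lat_def by auto
  have "x - y = A *\<^sub>v (c - d)" using c d A by (simp add: mult_minus_distrib_mat_vec)
  thus ?thesis unfolding lat_def using c d A by auto
qed

lemma lat_zero: assumes A: "A \<in> carrier_mat n m" shows "0\<^sub>v n \<in> lat A"
proof -
  have "0\<^sub>v n = A *\<^sub>v 0\<^sub>v m" using A by auto
  thus ?thesis unfolding lat_def using A by auto
qed

lemma lat_unimod:
  assumes A: "A \<in> carrier_mat n n" and E: "E \<in> carrier_mat n n"
    and dE: "det E = 1 \<or> det E = -1"
  shows "lat (A * E) = lat A"
proof
  show "lat (A * E) \<subseteq> lat A"
  proof
    fix x assume "x \<in> lat (A * E)"
    then obtain c where c: "c \<in> carrier_vec n" "x = A * E *\<^sub>v c" using A E unfolding lat_def by auto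
    hence "x = A *\<^sub>v (E *\<^sub>v c)" using A E by (simp add: assoc_mult_mat_vec)
    thus "x \<in> lat A" unfolding lat_def using c E A by auto
  qed
next
  show "lat A \<subseteq> lat (A * E)"
  proof
    fix x assume "x \<in> lat A"
    then obtain c where c: "c \<in> carrier_vec n" "x = A *\<^sub>v c" using A unfolding lat_def by auto
    define E' where "E' = det E \<cdot>\<^sub>m adj_mat E"
    have E': "E' \<in> carrier_mat n n" unfolding E'_def using adj_mat[OF E] by auto
    have "E * E' = det E \<cdot>\<^sub>m (E * adj_mat E)" unfolding E'_def using adj_mat[OF E] E
      by (simp add: mult_smult_distrib)
    also have "\<dots> = (det E * det E) \<cdot>\<^sub>m 1\<^sub>m n" using adj_mat[OF E] by (auto intro!: eq_matI)
    also have "det E * det E = 1" using dE by auto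
    finally have EE: "E * E' = 1\<^sub>m n" by (auto intro!: eq_matI)
    have "A * E *\<^sub>v (E' *\<^sub>v c) = A *\<^sub>v ((E * E') *\<^sub>v c)" using A E E' c
      by (simp add: assoc_mult_mat_vec)
    also have "\<dots> = x" using EE c by simp
    finally show "x \<in> lat (A * E)" unfolding lat_def using E' c A E by (auto intro!: exI[of _ "E' *\<^sub>v c"])
  qed
qed

definition vtl :: "'a vec \<Rightarrow> 'a vec" where
  "vtl v = vec (dim_vec v - 1) (\<lambda>i. v $ Suc i)"

lemma vtl_carrier[simp]: "v \<in> carrier_vec (Suc n) \<Longrightarrow> vtl v \<in> carrier_vec n"
  unfolding vtl_def by auto

lemma vtl_index[simp]: "v \<in> carrier_vec (Suc n) \<Longrightarrow> i < n \<Longrightarrow> vtl v $ i = v $ Suc i"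
  unfolding vtl_def by auto

lemma vCons_vtl: "v \<in> carrier_vec (Suc n) \<Longrightarrow> vCons (v $ 0) (vtl v) = v"
  by (rule eq_vecI, auto simp: vCons_def vtl_def split: nat.splits)

lemma vCons_carrier[simp]: "x \<in> carrier_vec n \<Longrightarrow> vCons a x \<in> carrier_vec (Suc n)"
  unfolding vCons_def carrier_vec_def by auto

lemma vCons_minus: "x \<in> carrier_vec n \<Longrightarrow> y \<in> carrier_vec n \<Longrightarrow>
   vCons (a :: 'a :: ab_group_add) x - vCons b y = vCons (a - b) (x - y)"
  by (rule eq_vecI, auto simp: vCons_def split: nat.splits)

lemma vCons_inj: "x \<in> carrier_vec n \<Longrightarrow> y \<in> carrier_vec n \<Longrightarrow>
   vCons a x = vCons b y \<Longrightarrow> a = b \<and> x = y"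
proof -
  assume x: "x \<in> carrier_vec n" and y: "y \<in> carrier_vec n" and e: "vCons a x = vCons b y"
  have "vCons a x $ 0 = vCons b y $ 0" using e by simp
  hence ab: "a = b" by simp
  have "x = y"
  proof (rule eq_vecI)
    fix i assume "i < dim_vec y"
    hence "vCons a x $ Suc i = vCons b y $ Suc i" using e by simp
    thus "x $ i = y $ i" by simp
  qed (insert x y, auto)
  with ab show ?thesis by simp
qed

lemma mult_vCons:
  assumes A: "(A :: 'a :: comm_ring_1 mat) \<in> carrier_mat (Suc n) (Suc n)" and row0: "\<And>j. 0 < j \<Longrightarrow> j < Suc n \<Longrightarrow> A $$ (0,j) = 0"
    and c: "c \<in> carrier_vec n"
  shows "A *\<^sub>v vCons c0 c = vCons (A $$ (0,0) * c0)
     (c0 \<cdot>\<^sub>v vec n (\<lambda>i. A $$ (Suc i, 0)) + mat_delete A 0 0 *\<^sub>v c)"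
proof (rule eq_vecI)
  fix i assume i: "i < dim_vec (vCons (A $$ (0,0) * c0)
     (c0 \<cdot>\<^sub>v vec n (\<lambda>i. A $$ (Suc i, 0)) + mat_delete A 0 0 *\<^sub>v c))"
  hence i: "i < Suc n" using c A by simp
  have sp: "(A *\<^sub>v vCons c0 c) $ i = (\<Sum>j<Suc n. A $$ (i,j) * vCons c0 c $ j)"
    using A c i by (simp add: scalar_prod_def atLeast0LessThan)
  also have "\<dots> = A $$ (i,0) * c0 + (\<Sum>j<n. A $$ (i, Suc j) * c $ j)"
    unfolding sum.lessThan_Suc_shift using c by (simp add: vCons_def)
  finally have sp: "(A *\<^sub>v vCons c0 c) $ i = A $$ (i,0) * c0 + (\<Sum>j<n. A $$ (i, Suc j) * c $ j)" .
  show "(A *\<^sub>v vCons c0 c) $ i = vCons (A $$ (0,0) * c0)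
     (c0 \<cdot>\<^sub>v vec n (\<lambda>i. A $$ (Suc i, 0)) + mat_delete A 0 0 *\<^sub>v c) $ i"
  proof (cases i)
    case 0
    thus ?thesis using sp row0 by simp
  next
    case (Suc i')
    hence i': "i' < n" using i by simp
    have "(mat_delete A 0 0 *\<^sub>v c) $ i' = (\<Sum>j<n. A $$ (Suc i', Suc j) * c $ j)"
      using A c i' by (simp add: scalar_prod_def atLeast0LessThan mat_delete_def)
    thus ?thesis using sp Suc i' A c by (simp add: mult.commute add.commute)
  qed
qed (insert A c, auto)

lemma det_row0:
  assumes A: "(A :: 'a :: comm_ring_1 mat) \<in> carrier_mat (Suc n) (Suc n)" and row0: "\<And>j. 0 < j \<Longrightarrow> j < Suc n \<Longrightarrow> A $$ (0,j) = 0"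
  shows "det A = A $$ (0,0) * det (mat_delete A 0 0)"
proof -
  have "det A = (\<Sum>j<Suc n. A $$ (0,j) * cofactor A 0 j)" by (rule laplace_expansion_row[OF A], simp)
  also have "\<dots> = A $$ (0,0) * cofactor A 0 0" unfolding sum.lessThan_Suc_shift using row0 by simp
  finally show ?thesis by (simp add: cofactor_def)
qed

lemma block_case:
  assumes A: "A \<in> carrier_mat (Suc n) (Suc n)" and row0: "\<And>j. 0 < j \<Longrightarrow> j < Suc n \<Longrightarrow> A $$ (0,j) = 0"
    and a: "A $$ (0,0) \<noteq> 0"
    and R': "finite R'" "reps n (mat_delete A 0 0) R'"
  shows "\<exists>R. finite R \<and> card R = nat \<bar>A $$ (0,0)\<bar> * card R' \<and> reps (Suc n) A R"
proof -
  define a where "a = A $$ (0,0)"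
  define A' where "A' = mat_delete A 0 0"
  define col where "col = vec n (\<lambda>i. A $$ (Suc i, 0))"
  have A': "A' \<in> carrier_mat n n" unfolding A'_def using mat_delete_carrier[OF A] by simp
  have col: "col \<in> carrier_vec n" unfolding col_def by simp
  have mult: "\<And>c0 c. c \<in> carrier_vec n \<Longrightarrow> A *\<^sub>v vCons c0 c = vCons (a * c0) (c0 \<cdot>\<^sub>v col + A' *\<^sub>v c)"
    unfolding a_def col_def A'_def by (rule mult_vCons[OF A row0])
  define R where "R = (\<lambda>(t,r). vCons t r) ` ({0..<\<bar>a\<bar>} \<times> R')"
  have R'c: "R' \<subseteq> carrier_vec n" using R'(2) unfolding reps_def A'_def by blast
  have inj: "inj_on (\<lambda>(t,r). vCons t r) ({0..<\<bar>a\<bar>} \<times> R')"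
  proof (rule inj_onI)
    fix x y assume x: "x \<in> {0..<\<bar>a\<bar>} \<times> R'" and y: "y \<in> {0..<\<bar>a\<bar>} \<times> R'"
      and e: "(\<lambda>(t,r). vCons t r) x = (\<lambda>(t,r). vCons t r) y"
    obtain t1 s1 where 1: "x = (t1, s1)" "s1 \<in> carrier_vec n" using x R'c by (cases x, auto)
    obtain t2 s2 where 2: "y = (t2, s2)" "s2 \<in> carrier_vec n" using y R'c by (cases y, auto)
    from e 1 2 have "vCons t1 s1 = vCons t2 s2" by simp
    from vCons_inj[OF 1(2) 2(2) this] show "x = y" using 1 2 by simp
  qed
  have fin: "finite R" unfolding R_def using R'(1) by simp
  have card: "card R = nat \<bar>a\<bar> * card R'" unfolding R_def card_image[OF inj]
    by (simp add: card_cartesian_product)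
  have Rc: "R \<subseteq> carrier_vec (Suc n)"
  proof
    fix x assume "x \<in> R"
    then obtain p where p: "p \<in> {0..<\<bar>a\<bar>} \<times> R'" "x = (\<lambda>(t,r). vCons t r) p" unfolding R_def by (rule imageE)
    obtain t r where tr: "p = (t, r)" by (cases p)
    have "r \<in> carrier_vec n" using p(1) tr R'c by auto
    thus "x \<in> carrier_vec (Suc n)" using p(2) tr by simp
  qed
  have Rmem: "\<exists>t r. t \<in> {0..<\<bar>a\<bar>} \<and> r \<in> R' \<and> x = vCons t r" if "x \<in> R" for x
  proof -
    from that obtain p where p: "p \<in> {0..<\<bar>a\<bar>} \<times> R'" "x = (\<lambda>(t,r). vCons t r) p" unfolding R_def by (rule imageE)
    obtain t r where tr: "p = (t, r)" by (cases p)
    show ?thesis using p tr by (intro exI[of _ t] exI[of _ r], simp)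
  qed
  have ex: "\<exists>r\<in>R. v - r \<in> lat A" if v: "v \<in> carrier_vec (Suc n)" for v
  proof -
    define t where "t = v $ 0 mod \<bar>a\<bar>"
    define c0 where "c0 = (v $ 0 - t) div a"
    have t: "t \<in> {0..<\<bar>a\<bar>}" unfolding t_def using a a_def by auto
    have ac0: "a * c0 = v $ 0 - t"
    proof -
      have "\<bar>a\<bar> dvd v $ 0 - t" unfolding t_def by (simp add: minus_mod_eq_mult_div)
      hence "a dvd v $ 0 - t" by simp
      thus ?thesis unfolding c0_def by simp
    qed
    define w where "w = vtl v - c0 \<cdot>\<^sub>v col"
    have w: "w \<in> carrier_vec n" unfolding w_def using v col by simp
    from R'(2) w obtain r where r: "r \<in> R'" "w - r \<in> lat A'" unfolding reps_def A'_def by auto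
    from r(2) A' obtain c where c: "c \<in> carrier_vec n" "w - r = A' *\<^sub>v c" unfolding lat_def by auto
    have rc: "r \<in> carrier_vec n" using r R'c by auto
    have "A *\<^sub>v vCons c0 c = vCons (v $ 0 - t) (c0 \<cdot>\<^sub>v col + (w - r))" using mult[OF c(1)] c(2) ac0 by simp
    also have "c0 \<cdot>\<^sub>v col + (w - r) = vtl v - r" unfolding w_def using col rc v
      by (intro eq_vecI, auto)
    also have "vCons (v $ 0 - t) (vtl v - r) = v - vCons t r"
      using vCons_minus[of "vtl v" n r "v $ 0" t] v rc vCons_vtl[OF v] by simp
    finally have "v - vCons t r \<in> lat A" unfolding lat_def using A c by (auto intro!: exI[of _ "vCons c0 c"])
    moreover have "vCons t r \<in> R" unfolding R_def using t r(1) by (intro image_eqI[of _ _ "(t,r)"]) auto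
    ultimately show ?thesis by auto
  qed
  have uniq: "r1 = r2" if r1: "r1 \<in> R" and r2: "r2 \<in> R" and d: "r1 - r2 \<in> lat A" for r1 r2
  proof -
    from Rmem[OF r1] obtain t1 s1 where 1: "t1 \<in> {0..<\<bar>a\<bar>}" "s1 \<in> R'" "r1 = vCons t1 s1" by blast
    from Rmem[OF r2] obtain t2 s2 where 2: "t2 \<in> {0..<\<bar>a\<bar>}" "s2 \<in> R'" "r2 = vCons t2 s2" by blast
    have s1: "s1 \<in> carrier_vec n" and s2: "s2 \<in> carrier_vec n" using 1 2 R'c by auto
    from d A obtain c where c: "c \<in> carrier_vec (Suc n)" "r1 - r2 = A *\<^sub>v c" unfolding lat_def by auto
    have tc: "vtl c \<in> carrier_vec n" using c(1) by simp
    have "A *\<^sub>v c = A *\<^sub>v vCons (c $ 0) (vtl c)" using vCons_vtl[OF c(1)] by simp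
    also have "\<dots> = vCons (a * c $ 0) (c $ 0 \<cdot>\<^sub>v col + A' *\<^sub>v vtl c)"
      by (rule mult[OF tc])
    finally have Ac: "A *\<^sub>v c = vCons (a * c $ 0) (c $ 0 \<cdot>\<^sub>v col + A' *\<^sub>v vtl c)" .
    have "r1 - r2 = vCons (t1 - t2) (s1 - s2)" using 1(3) 2(3) vCons_minus[OF s1 s2] by simp
    with c(2) Ac have e: "vCons (t1 - t2) (s1 - s2) = vCons (a * c $ 0) (c $ 0 \<cdot>\<^sub>v col + A' *\<^sub>v vtl c)"
      by simp
    have ss: "s1 - s2 \<in> carrier_vec n" using s1 s2 by simp
    have cc: "c $ 0 \<cdot>\<^sub>v col + A' *\<^sub>v vtl c \<in> carrier_vec n" using col A' tc by simp
    from vCons_inj[OF ss cc e] have t12: "t1 - t2 = a * c $ 0" and e2: "s1 - s2 = c $ 0 \<cdot>\<^sub>v col + A' *\<^sub>v vtl c"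
      by auto
    have "\<bar>a * c $ 0\<bar> < \<bar>a\<bar>" using 1(1) 2(1) t12 by auto
    hence "\<bar>a\<bar> * \<bar>c $ 0\<bar> < \<bar>a\<bar> * 1" by (simp add: abs_mult)
    moreover have pa: "0 < \<bar>a\<bar>" using a a_def by simp
    ultimately have "\<bar>c $ 0\<bar> < 1" using mult_less_cancel_left_pos[OF pa] by blast
    hence c0: "c $ 0 = 0" by simp
    have t12': "t1 = t2" using t12 c0 by simp
    have "0 \<cdot>\<^sub>v col + A' *\<^sub>v vtl c = A' *\<^sub>v vtl c" using col A' tc by (intro eq_vecI, auto)
    hence "s1 - s2 = A' *\<^sub>v vtl c" using e2 c0 by simp
    hence "s1 - s2 \<in> lat A'" unfolding lat_def using A' tc by auto
    moreover have "\<forall>r1\<in>R'. \<forall>r2\<in>R'. r1 - r2 \<in> lat A' \<longrightarrow> r1 = r2" using R'(2) unfolding reps_def A'_def by blast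
    ultimately have "s1 = s2" using 1(2) 2(2) by blast
    with t12' 1(3) 2(3) show ?thesis by simp
  qed
  have "reps (Suc n) A R" unfolding reps_def using Rc ex uniq by blast
  thus ?thesis using fin card a_def by blast
qed

lemma reps_cong: "lat A = lat B \<Longrightarrow> reps n A R = reps n B R"
  unfolding reps_def by simp

lemma block_case2:
  assumes A: "A \<in> carrier_mat (Suc n) (Suc n)" and row0: "\<And>j. 0 < j \<Longrightarrow> j < Suc n \<Longrightarrow> A $$ (0,j) = 0"
    and d: "det A \<noteq> 0"
    and IH: "\<And>B. B \<in> carrier_mat n n \<Longrightarrow> det B \<noteq> 0 \<Longrightarrow> \<exists>R. finite R \<and> card R = nat \<bar>det B\<bar> \<and> reps n B R"
  shows "\<exists>R. finite R \<and> card R = nat \<bar>det A\<bar> \<and> reps (Suc n) A R"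
proof -
  have dA: "det A = A $$ (0,0) * det (mat_delete A 0 0)" by (rule det_row0[OF A row0])
  with d have a: "A $$ (0,0) \<noteq> 0" and d': "det (mat_delete A 0 0) \<noteq> 0" by auto
  have A': "mat_delete A 0 0 \<in> carrier_mat n n" using mat_delete_carrier[OF A] by simp
  from IH[OF A' d'] obtain R' where R': "finite R'" "card R' = nat \<bar>det (mat_delete A 0 0)\<bar>"
    "reps n (mat_delete A 0 0) R'" by blast
  from block_case[OF A row0 a R'(1) R'(3)] obtain R where R: "finite R"
    "card R = nat \<bar>A $$ (0,0)\<bar> * card R'" "reps (Suc n) A R" by blast
  have "card R = nat \<bar>det A\<bar>" unfolding R(2) R'(2) dA by (simp add: abs_mult nat_mult_distrib)
  thus ?thesis using R by blast
qed

definition meas :: "int mat \<Rightarrow> nat" where "meas A = (\<Sum>j<dim_col A. nat \<bar>A $$ (0,j)\<bar>)"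

lemma euclid_step:
  fixes x y :: int
  assumes "x \<noteq> 0" "y \<noteq> 0" "\<bar>x\<bar> \<le> \<bar>y\<bar>"
  shows "\<bar>(if (x > 0) = (y > 0) then -1 else 1) * x + y\<bar> < \<bar>y\<bar>"
  using assms by (cases "x > 0"; cases "y > 0"; auto)

theorem lattice_index:
  "A \<in> carrier_mat n n \<Longrightarrow> det A \<noteq> 0 \<Longrightarrow> \<exists>R. finite R \<and> card R = nat \<bar>det A\<bar> \<and> reps n A R"
proof (induction n arbitrary: A)
  case 0
  have c0: "v = 0\<^sub>v 0" if "v \<in> carrier_vec 0" for v :: "int vec" using that by (intro eq_vecI, auto)
  have "reps 0 A {0\<^sub>v 0}" unfolding reps_def using lat_zero[OF "0.prems"(1)] c0 by auto
  moreover have "det A = 1" using "0.prems"(1) by simp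
  ultimately show ?case by auto
next
  case (Suc n)
  have main: "\<And>A. A \<in> carrier_mat (Suc n) (Suc n) \<Longrightarrow> det A \<noteq> 0 \<Longrightarrow> meas A = m \<Longrightarrow>
     \<exists>R. finite R \<and> card R = nat \<bar>det A\<bar> \<and> reps (Suc n) A R" for m
  proof (induction m rule: less_induct)
    case (less m A)
    note A = less.prems(1) and d = less.prems(2)
    define Z where "Z = {j. j < Suc n \<and> A $$ (0,j) \<noteq> 0}"
    have "Z \<noteq> {}"
    proof
      assume "Z = {}"
      hence "\<And>j. j < Suc n \<Longrightarrow> A $$ (0,j) = 0" unfolding Z_def by auto
      hence "det A = 0" using laplace_expansion_row[OF A, of 0] by simp
      with d show False by simp
    qed
    show ?case
    proof (cases "\<exists>i j. i \<in> Z \<and> j \<in> Z \<and> i \<noteq> j")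
      case True
      then obtain i0 j0 where ij0: "i0 \<in> Z" "j0 \<in> Z" "i0 \<noteq> j0" by blast
      obtain i j where ij: "i \<in> Z" "j \<in> Z" "i \<noteq> j" "\<bar>A $$ (0,i)\<bar> \<le> \<bar>A $$ (0,j)\<bar>"
      proof (cases "\<bar>A $$ (0,i0)\<bar> \<le> \<bar>A $$ (0,j0)\<bar>")
        case True thus ?thesis using that ij0 by blast
      next
        case False thus ?thesis using that[of j0 i0] ij0 by auto
      qed
      define s :: int where "s = (if (A $$ (0,i) > 0) = (A $$ (0,j) > 0) then -1 else 1)"
      define A2 where "A2 = addcol s j i A"
      have i: "i < Suc n" and j: "j < Suc n" and ai: "A $$ (0,i) \<noteq> 0" and aj: "A $$ (0,j) \<noteq> 0"
        using ij unfolding Z_def by auto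
      have A2e: "A2 = A * addrow_mat (Suc n) s i j" unfolding A2_def by (rule addcol_mat[OF A i])
      have E: "addrow_mat (Suc n) s i j \<in> carrier_mat (Suc n) (Suc n)" by (simp add: addrow_mat_def)
      have dE: "det (addrow_mat (Suc n) s i j) = 1" by (rule det_addrow_mat, use ij in auto)
      have A2c: "A2 \<in> carrier_mat (Suc n) (Suc n)" unfolding A2e using A E by simp
      have dA2: "det A2 = det A" unfolding A2e using det_mult[OF A E] dE by simp
      have lat2: "lat A2 = lat A" unfolding A2e by (rule lat_unimod[OF A E], use dE in simp)
      have "meas A2 < meas A"
      proof -
        have "meas A2 = (\<Sum>l<Suc n. nat \<bar>A2 $$ (0,l)\<bar>)" unfolding meas_def using A2c by simp
        also have "\<dots> < (\<Sum>l<Suc n. nat \<bar>A $$ (0,l)\<bar>)"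
        proof (rule sum_strict_mono_ex1)
          show "\<forall>l\<in>{..<Suc n}. nat \<bar>A2 $$ (0,l)\<bar> \<le> nat \<bar>A $$ (0,l)\<bar>"
          proof
            fix l assume l: "l \<in> {..<Suc n}"
            show "nat \<bar>A2 $$ (0,l)\<bar> \<le> nat \<bar>A $$ (0,l)\<bar>"
            proof (cases "l = j")
              case True
              thus ?thesis using euclid_step[OF ai aj ij(4)] A j unfolding A2_def s_def by simp
            next
              case False
              thus ?thesis using A l unfolding A2_def by simp
            qed
          qed
          show "\<exists>l\<in>{..<Suc n}. nat \<bar>A2 $$ (0,l)\<bar> < nat \<bar>A $$ (0,l)\<bar>"
            using euclid_step[OF ai aj ij(4)] A j unfolding A2_def s_def by (intro bexI[of _ j], auto)
        qed simp
        also have "\<dots> = meas A" unfolding meas_def using A by simp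
        finally show ?thesis .
      qed
      from less.IH[OF _ A2c _ refl] this less.prems(3) dA2 d
      obtain R where "finite R" "card R = nat \<bar>det A2\<bar>" "reps (Suc n) A2 R" by auto
      thus ?thesis using dA2 reps_cong[OF lat2] by auto
    next
      case False
      obtain j where jZ: "j \<in> Z" using \<open>Z \<noteq> {}\<close> by blast
      have Zj: "\<And>l. l < Suc n \<Longrightarrow> l \<noteq> j \<Longrightarrow> A $$ (0,l) = 0" using False jZ unfolding Z_def by blast
      have j: "j < Suc n" and aj: "A $$ (0,j) \<noteq> 0" using jZ unfolding Z_def by auto
      show ?thesis
      proof (cases "j = 0")
        case True
        show ?thesis by (rule block_case2[OF A _ d Suc.IH], use Zj True in auto)
      next
        case False
        define A2 where "A2 = swapcols 0 j A"
        have A2e: "A2 = A * swaprows_mat (Suc n) 0 j" unfolding A2_def by (rule swapcols_mat[OF A], use j in auto)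
        have E: "(swaprows_mat (Suc n) 0 j :: int mat) \<in> carrier_mat (Suc n) (Suc n)" by (simp add: swaprows_mat_def)
        have dE: "det (swaprows_mat (Suc n) 0 j :: int mat) = -1" by (rule det_swaprows_mat, use j False in auto)
        have A2c: "A2 \<in> carrier_mat (Suc n) (Suc n)" unfolding A2e using A E by simp
        have dA2: "det A2 = - det A" unfolding A2e det_mult[OF A E] dE by simp
        have lat2: "lat A2 = lat A" unfolding A2e by (rule lat_unimod[OF A E], use dE in simp)
        have row0: "A2 $$ (0,l) = 0" if "0 < l" "l < Suc n" for l
          using that A Zj False unfolding A2_def by auto
        from block_case2[OF A2c row0 _ Suc.IH] dA2 d
        obtain R where "finite R" "card R = nat \<bar>det A2\<bar>" "reps (Suc n) A2 R" by auto
        thus ?thesis using dA2 reps_cong[OF lat2] by auto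
      qed
    qed
  qed
  show ?case using main[OF Suc.prems refl] .
qed


definition om :: "nat \<Rightarrow> nat \<Rightarrow> complex" where
  "om n j = cis (2 * pi * real j / real n)"

definition Jset :: "nat \<Rightarrow> nat set" where
  "Jset n = {j. j < n \<and> coprime j n}"

definition Cprod :: "nat \<Rightarrow> complex poly" where
  "Cprod n = (\<Prod>j\<in>Jset n. [:- om n j, 1:])"

lemma finite_Jset[simp]: "finite (Jset n)" unfolding Jset_def by auto

lemma om_add_mult: assumes "n > 0" shows "om n (a + n * m) = om n a"
proof -
  have "2 * pi * real (a + n * m) / real n = 2 * pi * real a / real n + 2 * pi * real m"
    using assms by (simp add: field_simps)
  hence "om n (a + n * m) = cis (2 * pi * real a / real n + 2 * pi * real m)"
    unfolding om_def by (simp only:)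
  also have "\<dots> = cis (2 * pi * real a / real n) * cis (2 * pi * real m)"
    by (simp only: cis_mult)
  also have "cis (2 * pi * real m) = 1" by (rule cis_multiple_2pi, simp)
  finally show ?thesis unfolding om_def by simp
qed

lemma om_mod: assumes "n > 0" shows "om n (a mod n) = om n a"
  using om_add_mult[OF assms, of "a mod n" "a div n"] by simp

lemma om_power: "om n a ^ b = om n (a * b)"
  unfolding om_def DeMoivre by (simp add: field_simps)

lemma om_pow_n: assumes "n > 0" shows "om n a ^ n = 1"
proof -
  have "om n a ^ n = om n (0 + n * a)" unfolding om_power by (simp add: mult.commute)
  also have "\<dots> = om n 0" by (rule om_add_mult[OF assms])
  finally show ?thesis by (simp add: om_def)
qed

lemma om_inj: assumes "a < n" "b < n" "om n a = om n b" shows "a = b"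
proof (rule ccontr)
  assume ne: "a \<noteq> b"
  have n: "n > 0" using assms by auto
  have "cis (2 * pi * real a / real n) = cis (2 * pi * real b / real n)" using assms(3) unfolding om_def .
  hence "cis (2 * pi * real a / real n) / cis (2 * pi * real b / real n) = 1" by simp
  hence "cis (2 * pi * real a / real n - 2 * pi * real b / real n) = 1" by (simp add: cis_divide)
  hence "cos (2 * pi * real a / real n - 2 * pi * real b / real n) = 1"
    by (metis cis.sel(1) one_complex.sel(1))
  then obtain z :: int where z: "2 * pi * real a / real n - 2 * pi * real b / real n = real_of_int z * 2 * pi"
    unfolding cos_one_2pi_int by blast
  hence "pi * (real a * 2) = pi * (real b * 2) + pi * (real_of_int z * (real n * 2))" using n by (simp add: field_simps)
  hence "pi * (2 * (real a - real b - real_of_int z * real n)) = 0" by (simp add: algebra_simps)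
  hence "real a - real b = real_of_int z * real n" by simp
  hence zz: "int a - int b = z * int n" by (metis of_int_of_nat_eq of_int_diff of_int_eq_iff of_int_mult)
  have "z \<noteq> 0" using ne zz by auto
  hence "\<bar>z\<bar> \<ge> 1" by simp
  hence "\<bar>z\<bar> * int n \<ge> 1 * int n" by (intro mult_right_mono, auto)
  hence "\<bar>z * int n\<bar> \<ge> int n" by (simp add: abs_mult)
  moreover have "\<bar>int a - int b\<bar> < int n" using assms by auto
  ultimately show False using zz by simp
qed

lemma linear_prod_dvd:
  fixes p :: "'a :: idom poly"
  assumes "finite S" "p \<noteq> 0" "\<forall>s\<in>S. [:-s,1:]^k dvd p"
  shows "(\<Prod>s\<in>S. [:-s,1:]^k) dvd p"
  using assms
proof (induction S rule: finite_induct)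
  case empty thus ?case by simp
next
  case (insert a S)
  from insert.IH[OF insert.prems(1)] insert.prems(2)
  obtain q where q: "p = (\<Prod>s\<in>S. [:-s,1:]^k) * q" by (auto elim: dvdE)
  have P0: "poly (\<Prod>s\<in>S. [:-s,1:]^k) a \<noteq> 0" using insert.hyps
    by (auto simp: poly_prod prod_zero_iff)
  have q0: "q \<noteq> 0" using q insert.prems(1) by auto
  have Pn0: "(\<Prod>s\<in>S. [:-s,1:]^k) \<noteq> 0" using P0 by auto
  have "[:-a,1:]^k dvd p" using insert.prems(2) by simp
  hence "k \<le> order a p" using insert.prems(1) by (simp add: order_divides)
  also have "order a p = order a (\<Prod>s\<in>S. [:-s,1:]^k) + order a q"
    unfolding q by (rule order_mult, use Pn0 q0 in simp)
  also have "order a (\<Prod>s\<in>S. [:-s,1:]^k) = 0" by (rule order_0I[OF P0])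
  finally have "[:-a,1:]^k dvd q" using q0 by (simp add: order_divides)
  hence "(\<Prod>s\<in>S. [:-s,1:]^k) * [:-a,1:]^k dvd p" unfolding q by (simp add: mult_dvd_mono)
  thus ?case using insert.hyps by (simp add: mult.commute)
qed

lemma xn_minus_1:
  assumes n: "n > 0"
  shows "monom (1::complex) n - 1 = (\<Prod>j<n. [:- om n j, 1:])"
proof -
  define X where "X = monom (1::complex) n - 1"
  define P where "P = (\<Prod>j<n. [:- om n j, 1:])"
  have inj: "inj_on (om n) {..<n}" using om_inj by (auto simp: inj_on_def)
  have P': "P = (\<Prod>s\<in>om n ` {..<n}. [:-s,1:]^1)" unfolding P_def by (simp add: prod.reindex[OF inj])
  have X0: "X \<noteq> 0"
  proof
    assume "X = 0"
    hence "coeff X n = 0" by simp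
    thus False unfolding X_def using n by simp
  qed
  have "P dvd X" unfolding P'
  proof (rule linear_prod_dvd[OF _ X0])
    show "\<forall>s\<in>om n ` {..<n}. [:- s, 1:] ^ 1 dvd X"
    proof
      fix s assume "s \<in> om n ` {..<n}"
      then obtain j where "s = om n j" by auto
      hence "poly X s = 0" unfolding X_def using om_pow_n[OF n] by (simp add: poly_monom)
      thus "[:- s, 1:] ^ 1 dvd X" by (simp add: poly_eq_0_iff_dvd)
    qed
  qed simp
  then obtain q where q: "X = P * q" by (elim dvdE)
  have dP: "degree P = n" unfolding P_def by (subst degree_prod_eq_sum_degree, auto)
  have lP: "lead_coeff P = 1" unfolding P_def by (simp add: lead_coeff_prod)
  have "coeff X n = 1" unfolding X_def using n by simp
  hence "n \<le> degree X" by (intro le_degree, simp)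
  moreover have "degree X \<le> n" unfolding X_def by (rule degree_diff_le, auto simp: degree_monom_le)
  ultimately have dX: "degree X = n" by simp
  have lX: "lead_coeff X = 1" using dX unfolding X_def using n by simp
  have q0: "q \<noteq> 0" using q X0 by auto
  have P0: "P \<noteq> 0" using lP by auto
  have "degree X = degree P + degree q" unfolding q by (rule degree_mult_eq[OF P0 q0])
  hence dq: "degree q = 0" using dP dX by simp
  have "lead_coeff X = lead_coeff P * lead_coeff q" unfolding q by (simp add: lead_coeff_mult)
  hence "coeff q 0 = 1" using lP lX dq by simp
  hence "q = 1" using dq by (metis degree_0_id one_pCons)
  thus ?thesis using q unfolding X_def P_def by simp
qed

lemma prod_decomp:
  assumes n: "n > 0"
  shows "(\<Prod>i<n. f (om n i)) = (\<Prod>d\<in>{d. d dvd n}. \<Prod>j\<in>Jset d. f (om d j))"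
proof -
  define D where "D = {d. d dvd n}"
  have finD: "finite D" unfolding D_def using n by simp
  define h where "h = (\<lambda>(d::nat, j::nat). j * (n div d))"
  have dpos: "d > 0" if "d \<in> D" for d using that n unfolding D_def by (auto intro: Nat.gr0I)
  have key: "gcd (h (d,j)) n = n div d" if "(d,j) \<in> Sigma D Jset" for d j
  proof -
    from that have d: "d dvd n" and cop: "coprime j d" unfolding D_def Jset_def by auto
    have nd: "n = d * (n div d)" using d by simp
    have "gcd (h (d,j)) n = gcd ((n div d) * j) ((n div d) * d)" unfolding h_def
      by (subst (2) nd, simp add: mult.commute)
    also have "\<dots> = (n div d) * gcd j d" by (simp add: gcd_mult_distrib_nat)
    also have "gcd j d = 1" using cop by simp
    finally show ?thesis by simp
  qed
  have bij: "bij_betw h (Sigma D Jset) {..<n}"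
  proof (rule bij_betwI')
    fix x y assume x: "x \<in> Sigma D Jset" and y: "y \<in> Sigma D Jset"
    obtain d j where xe: "x = (d,j)" by (cases x)
    obtain d' j' where ye: "y = (d',j')" by (cases y)
    show "(h x = h y) = (x = y)"
    proof
      assume e: "h x = h y"
      have "n div d = n div d'" using key[of d j] key[of d' j'] x y e xe ye by simp
      moreover have "d dvd n" "d' dvd n" using x y xe ye unfolding D_def by auto
      ultimately have dd: "d = d'" using n
        by (metis dvd_div_mult_self nat_mult_eq_cancel_disj div_eq_0_iff dvd_imp_le not_le)
      have "n div d > 0" using \<open>d dvd n\<close> n by (metis dvd_div_eq_0_iff gr0I less_nat_zero_code)
      hence "j = j'" using e dd xe ye unfolding h_def by simp
      thus "x = y" using dd xe ye by simp
    qed simp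
  next
    fix x assume x: "x \<in> Sigma D Jset"
    obtain d j where xe: "x = (d,j)" by (cases x)
    have d: "d dvd n" and j: "j < d" using x xe unfolding D_def Jset_def by auto
    have nd: "n = d * (n div d)" using d by simp
    have "n div d > 0" using d n by (metis dvd_div_eq_0_iff gr0I less_nat_zero_code)
    hence "j * (n div d) < d * (n div d)" using j by simp
    thus "h x \<in> {..<n}" unfolding h_def xe using nd by simp
  next
    fix i assume i: "i \<in> {..<n}"
    define g where "g = gcd i n"
    have g: "g > 0" unfolding g_def using n by simp
    define d where "d = n div g"
    define j where "j = i div g"
    have gi: "g dvd i" and gn: "g dvd n" unfolding g_def by auto
    have nd: "n = d * g" unfolding d_def using gn by simp
    have ij: "i = j * g" unfolding j_def using gi by simp
    have dn: "d dvd n" using nd by simp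
    have "j * g < d * g" using i nd ij by simp
    hence jd: "j < d" using g by simp
    have cop: "coprime j d" unfolding j_def d_def g_def by (rule div_gcd_coprime, use n in simp)
    have "n div d = g" using nd g by (metis nonzero_mult_div_cancel_left mult.commute n not_gr0 mult_is_0)
    hence "h (d,j) = i" unfolding h_def using ij by simp
    moreover have "(d,j) \<in> Sigma D Jset" unfolding D_def Jset_def using dn jd cop by simp
    ultimately show "\<exists>x\<in>Sigma D Jset. i = h x" by force
  qed
  have omh: "om n (h (d,j)) = om d j" if "(d,j) \<in> Sigma D Jset" for d j
  proof -
    from that have d: "d dvd n" unfolding D_def by auto
    have nd: "real n = real d * real (n div d)" using d by (metis dvd_mult_div_cancel of_nat_mult)
    have pos: "real (n div d) > 0" using d n by (metis dvd_div_eq_0_iff gr0I less_nat_zero_code of_nat_0_less_iff)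
    have "2 * pi * real (j * (n div d)) / real n = 2 * pi * real j / real d"
      unfolding nd using pos by (simp add: field_simps)
    thus ?thesis unfolding om_def h_def by simp
  qed
  have "(\<Prod>i<n. f (om n i)) = (\<Prod>x\<in>Sigma D Jset. f (om n (h x)))"
    by (rule prod.reindex_bij_betw[OF bij, symmetric])
  also have "\<dots> = (\<Prod>x\<in>Sigma D Jset. f (om (fst x) (snd x)))"
    by (rule prod.cong, auto simp: omh)
  also have "\<dots> = (\<Prod>d\<in>D. \<Prod>j\<in>Jset d. f (om d j))"
    using prod.Sigma[of D Jset "\<lambda>d j. f (om d j)"] finD by (simp add: split_def)
  finally show ?thesis unfolding D_def .
qed

lemma xn_minus_1_Cprod:
  assumes n: "n > 0"
  shows "monom (1::complex) n - 1 = (\<Prod>d\<in>{d. d dvd n}. Cprod d)"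
  unfolding xn_minus_1[OF n] Cprod_def by (rule prod_decomp[OF n])

lemma monic_divmod:
  fixes M p :: "int poly"
  assumes M: "lead_coeff M = 1"
  shows "\<exists>q r. p = M * q + r \<and> (r = 0 \<or> degree r < degree M)"
proof -
  have M0: "M \<noteq> 0" using M by auto
  obtain q r where qr: "pseudo_divmod p M = (q, r)" by (cases "pseudo_divmod p M")
  from pseudo_divmod[OF M0 qr] M show ?thesis by auto
qed

lemma dvd_transfer:
  fixes M p :: "int poly"
  assumes M: "lead_coeff M = 1"
    and d: "(of_int_poly M :: complex poly) dvd of_int_poly p"
  shows "M dvd p"
proof -
  obtain q r where qr: "p = M * q + r" "r = 0 \<or> degree r < degree M" using monic_divmod[OF M] by blast
  have "(of_int_poly r :: complex poly) = of_int_poly p - of_int_poly M * of_int_poly q"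
    unfolding qr by (simp add: of_int_poly_hom.hom_add of_int_poly_hom.hom_mult)
  hence dr: "(of_int_poly M :: complex poly) dvd of_int_poly r" using d by simp
  have "r = 0"
  proof (rule ccontr)
    assume r0: "r \<noteq> 0"
    hence "(of_int_poly r :: complex poly) \<noteq> 0" by simp
    from dvd_imp_degree_le[OF dr this] have "degree M \<le> degree r" by simp
    with qr(2) r0 show False by simp
  qed
  thus ?thesis using qr by simp
qed

lemma lead_coeff_Cprod: "lead_coeff (Cprod n) = 1"
  unfolding Cprod_def by (simp add: lead_coeff_prod)

lemma degree_Cprod: "degree (Cprod n) = card (Jset n)"
  unfolding Cprod_def by (subst degree_prod_eq_sum_degree, auto)

lemma Cprod_int: "n > 0 \<Longrightarrow> \<exists>p. of_int_poly p = Cprod n"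
proof (induction n rule: less_induct)
  case (less n)
  define D' where "D' = {d. d dvd n \<and> d < n}"
  have finD': "finite D'" unfolding D'_def by simp
  have "\<forall>d\<in>D'. \<exists>p. of_int_poly p = Cprod d"
  proof
    fix d assume d: "d \<in> D'"
    hence "d > 0" using less.prems unfolding D'_def by (auto intro: Nat.gr0I)
    with d show "\<exists>p. of_int_poly p = Cprod d" using less.IH unfolding D'_def by auto
  qed
  then obtain f where f: "\<And>d. d \<in> D' \<Longrightarrow> of_int_poly (f d) = Cprod d" by metis
  define Q where "Q = (\<Prod>d\<in>D'. f d)"
  have mQ: "of_int_poly Q = (\<Prod>d\<in>D'. Cprod d)" unfolding Q_def of_int_poly_hom.hom_prod
    using f by simp
  have "{d. d dvd n} = insert n D'" unfolding D'_def using less.prems by (auto simp: dvd_imp_le le_neq_implies_less)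
  hence X: "monom (1::complex) n - 1 = Cprod n * of_int_poly Q"
    unfolding xn_minus_1_Cprod[OF less.prems] mQ using finD' by (simp add: D'_def)
  have "lead_coeff (of_int_poly Q :: complex poly) = 1" unfolding mQ by (simp add: lead_coeff_prod lead_coeff_Cprod)
  hence lQ: "lead_coeff Q = 1" by simp
  have "(of_int_poly Q :: complex poly) dvd of_int_poly (monom 1 n - 1)"
    using X by (simp add: of_int_poly_hom.hom_minus)
  from dvd_transfer[OF lQ this] obtain q where q: "monom 1 n - 1 = Q * q" by (elim dvdE)
  have "(of_int_poly Q :: complex poly) * of_int_poly q = of_int_poly Q * Cprod n"
    using arg_cong[OF q, of "of_int_poly :: int poly \<Rightarrow> complex poly"] X
    by (simp add: of_int_poly_hom.hom_minus of_int_poly_hom.hom_mult mult.commute) (metis mult.commute)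
  moreover have "(of_int_poly Q :: complex poly) \<noteq> 0" using lQ by auto
  ultimately have "of_int_poly q = Cprod n" by simp
  thus ?case by blast
qed

lemma cyclo_prop: assumes "n > 0" shows "of_int_poly (cyclo n) = Cprod n"
proof -
  obtain p where p: "of_int_poly p = Cprod n" using Cprod_int[OF assms] by blast
  have "(of_int_poly (cyclo n) :: complex poly) = (\<Prod>j\<in>{j. j < n \<and> coprime j n}. [:- cis (2 * pi * real j / real n), 1:])"
    unfolding cyclo_def
  proof (rule theI)
    show "(of_int_poly p :: complex poly) = (\<Prod>j\<in>{j. j < n \<and> coprime j n}. [:- cis (2 * pi * real j / real n), 1:])"
      using p unfolding Cprod_def Jset_def om_def .
  next
    fix x assume "(of_int_poly x :: complex poly) = (\<Prod>j\<in>{j. j < n \<and> coprime j n}. [:- cis (2 * pi * real j / real n), 1:])"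
    with p have "(of_int_poly x :: complex poly) = of_int_poly p" unfolding Cprod_def Jset_def om_def by simp
    thus "x = p" by (rule of_int_poly_hom.injectivity)
  qed
  thus ?thesis unfolding Cprod_def Jset_def om_def .
qed

lemma card_Jset: assumes n: "n > 0" shows "card (Jset n) = totient n"
proof (cases "n = 1")
  case True
  have "Jset 1 = {0}" unfolding Jset_def by auto
  thus ?thesis using True by simp
next
  case False
  hence n1: "n > 1" using n by simp
  have "Jset n = totatives n"
    unfolding Jset_def totatives_def using n1
    by (auto simp: le_less intro: Nat.gr0I)
  thus ?thesis by (simp add: totient_def)
qed


definition tay :: "'a::comm_ring_1 \<Rightarrow> 'a poly \<Rightarrow> 'a poly" where
  "tay z p = pcompose p [:z, 1:]"

definition tc :: "'a::comm_ring_1 \<Rightarrow> nat \<Rightarrow> 'a poly \<Rightarrow> 'a" where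
  "tc z j p = coeff (tay z p) j"

lemma tay_add: "tay z (p + q) = tay z p + tay z q" unfolding tay_def by (simp add: pcompose_add)
lemma tay_diff: "tay z (p - q) = tay z p - tay z q" unfolding tay_def by (simp add: pcompose_diff)
lemma tay_mult: "tay z (p * q) = tay z p * tay z q" unfolding tay_def by (simp add: pcompose_mult)
lemma tay_power: "tay z (p ^ k) = tay z p ^ k" unfolding tay_def by (simp add: pcompose_hom.hom_power)
lemma tay_smult: "tay z (Polynomial.smult c p) = Polynomial.smult c (tay z p)" unfolding tay_def by (simp add: pcompose_smult)
lemma tay_sum: "tay z (sum f A) = (\<Sum>i\<in>A. tay z (f i))" unfolding tay_def by (simp add: pcompose_sum)
lemma tay_lin: "tay z [:-z, 1:] = [:0, 1:]" unfolding tay_def by (simp add: pcompose_pCons)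
lemma tay_const: "tay z [:c:] = [:c:]" unfolding tay_def by simp

lemma tc_add: "tc z j (p + q) = tc z j p + tc z j q" unfolding tc_def by (simp add: tay_add)
lemma tc_diff: "tc z j (p - q) = tc z j p - tc z j q" unfolding tc_def by (simp add: tay_diff)
lemma tc_smult: "tc z j (Polynomial.smult c p) = c * tc z j p" unfolding tc_def by (simp add: tay_smult)
lemma tc_sum: "tc z j (sum f A) = (\<Sum>i\<in>A. tc z j (f i))" unfolding tc_def by (simp add: tay_sum coeff_sum)
lemma tc_0[simp]: "tc z j 0 = 0" unfolding tc_def tay_def by simp

lemma x_pow: "[:0, 1:] ^ k = (monom 1 k :: 'a::comm_ring_1 poly)"
  by (simp add: monom_altdef)

lemma tc_lin_power_mult: assumes "j < k" shows "tc z j ([:-z,1:]^k * g) = 0"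
proof -
  have "tay z ([:-z,1:]^k * g) = monom 1 k * tay z g" by (simp add: tay_mult tay_power tay_lin x_pow)
  thus ?thesis unfolding tc_def using assms by (simp add: coeff_monom_mult)
qed

lemma tc_dvd: assumes "[:-z,1:]^k dvd p" "j < k" shows "tc z j p = 0"
  using assms tc_lin_power_mult by (auto elim!: dvdE)

lemma pcompose_monom1: "pcompose (monom 1 k) q = (q :: 'a :: comm_ring_1 poly) ^ k"
proof -
  have "pcompose (monom 1 k) q = pcompose ([:0,1:] ^ k) q" by (simp only: x_pow)
  also have "\<dots> = (pcompose [:0,1:] q) ^ k" by (simp add: pcompose_hom.hom_power)
  also have "pcompose [:0,1:] q = q" by (simp add: pcompose_pCons)
  finally show ?thesis .
qed

lemma tay_inv: "pcompose (tay z p) [:-z, 1:] = p"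
proof -
  have "pcompose (tay z p) [:-z, 1:] = pcompose p (pcompose [:z,1:] [:-z,1:])"
    unfolding tay_def by (simp only: pcompose_assoc)
  also have "pcompose [:z,1:] [:-z,1:] = [:0,1:]" by (simp add: pcompose_pCons)
  finally show ?thesis by simp
qed

lemma tc_zero_dvd: assumes "\<And>j. j < k \<Longrightarrow> tc z j p = 0" shows "[:-z,1:]^k dvd p"
proof -
  have "monom 1 k dvd tay z p" using assms unfolding tc_def monom_1_dvd_iff' by simp
  then obtain h where h: "tay z p = monom 1 k * h" by (elim dvdE)
  have "p = pcompose (tay z p) [:-z, 1:]" by (simp add: tay_inv)
  also have "\<dots> = [:-z,1:]^k * pcompose h [:-z,1:]" unfolding h by (simp add: pcompose_mult pcompose_monom1)
  finally show ?thesis by (metis dvd_triv_left)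
qed

lemma pcompose_monom: "pcompose (monom c i) q = Polynomial.smult c ((q :: 'a :: comm_ring_1 poly) ^ i)"
proof -
  have "monom c i = Polynomial.smult c (monom 1 i)" by (simp add: smult_monom)
  thus ?thesis by (simp add: pcompose_smult pcompose_monom1)
qed

lemma tc_chain:
  fixes p g :: "'a :: idom poly"
  shows "tc z j (pcompose p g) = (\<Sum>i\<le>j. tc (poly g z) i p * tc z j ((g - [:poly g z:]) ^ i))"
proof -
  define be where "be = poly g z"
  define T where "T = tay be p"
  define h where "h = g - [:be:]"
  have "pcompose [:-be, 1:] g = h" unfolding h_def by (simp add: pcompose_pCons)
  have pc: "pcompose p g = pcompose T h"
  proof -
    have "pcompose p g = pcompose (pcompose T [:-be,1:]) g" unfolding T_def by (simp add: tay_inv)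
    also have "\<dots> = pcompose T (pcompose [:-be,1:] g)" by (simp only: pcompose_assoc)
    also have "pcompose [:-be, 1:] g = h" unfolding h_def by (simp add: pcompose_pCons)
    finally show ?thesis .
  qed
  have "pcompose T h = pcompose (\<Sum>i\<le>degree T. monom (coeff T i) i) h" by (simp add: poly_as_sum_of_monoms)
  also have "\<dots> = (\<Sum>i\<le>degree T. Polynomial.smult (coeff T i) (h ^ i))" by (simp add: pcompose_sum pcompose_monom)
  finally have "tc z j (pcompose p g) = (\<Sum>i\<le>degree T. coeff T i * tc z j (h ^ i))"
    unfolding pc by (simp add: tc_sum tc_smult)
  also have "\<dots> = (\<Sum>i\<le>max (degree T) j. coeff T i * tc z j (h ^ i))"
    by (rule sum.mono_neutral_left, auto simp: coeff_eq_0)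
  also have "\<dots> = (\<Sum>i\<le>j. coeff T i * tc z j (h ^ i))"
  proof (rule sum.mono_neutral_right)
    show "finite {..max (degree T) j}" by simp
    show "{..j} \<subseteq> {..max (degree T) j}" by auto
    show "\<forall>i\<in>{..max (degree T) j} - {..j}. coeff T i * tc z j (h ^ i) = 0"
    proof
    fix i assume "i \<in> {..max (degree T) j} - {..j}"
    hence i: "j < i" by simp
    have "poly h z = 0" unfolding h_def be_def by simp
    hence "[:-z,1:] dvd h" by (simp add: poly_eq_0_iff_dvd)
    hence "[:-z,1:]^i dvd h^i" by (rule dvd_power_same)
    hence "tc z j (h^i) = 0" by (rule tc_dvd, use i in simp)
    thus "coeff T i * tc z j (h ^ i) = 0" by simp
    qed
  qed
  finally show ?thesis unfolding T_def h_def be_def tc_def by simp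
qed

lemma tc_diag:
  fixes z :: "'a :: idom"
  shows "tc z j ((monom 1 b - [:z^b:]) ^ j) = (of_nat b * z^(b-1))^j"
proof -
  define w where "w = tay z (monom 1 b - [:z^b:])"
  have w: "w = [:z,1:]^b - [:z^b:]" unfolding w_def tay_diff tay_const
    by (simp add: tay_def pcompose_monom1)
  have w0: "coeff w 0 = 0" unfolding w by (simp add: coeff_0_power)
  have w1: "coeff w 1 = of_nat b * z^(b-1)"
  proof (cases "b = 0")
    case True thus ?thesis unfolding w by simp
  next
    case False
    hence "coeff ([:z,1:]^b) 1 = of_nat (b choose 1) * 1 ^ 1 * z ^ (b - 1)"
      by (intro coeff_linear_poly_power, simp)
    thus ?thesis unfolding w by simp
  qed
  have "monom 1 1 dvd w" using w0 unfolding monom_1_dvd_iff' by simp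
  then obtain w' where w': "w = monom 1 1 * w'" by (elim dvdE)
  have cw': "coeff w' 0 = of_nat b * z^(b-1)" using w1 unfolding w' by (simp add: coeff_monom_mult)
  have "tc z j ((monom 1 b - [:z^b:]) ^ j) = coeff (w ^ j) j" unfolding tc_def w_def by (simp add: tay_power)
  also have "w ^ j = monom 1 j * w' ^ j" unfolding w' by (simp add: power_mult_distrib monom_power)
  also have "coeff (monom 1 j * w' ^ j) j = coeff (w' ^ j) 0" by (simp add: coeff_monom_mult)
  also have "\<dots> = (of_nat b * z^(b-1))^j" by (simp add: coeff_0_power cw')
  finally show ?thesis .
qed


lemma monom1_power: "(monom 1 b :: 'a::comm_ring_1 poly) ^ i = monom 1 (b * i)"
  by (simp add: x_pow[symmetric] power_mult)

locale cset =
  fixes n k b :: nat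
  assumes n: "n \<ge> 1" and k: "k \<ge> 1" and b: "b \<ge> 1" and cop: "coprime b n"
begin

definition d where "d = card (Jset n)"
definition N where "N = d * k"
definition e where "e = (SOME h. bij_betw h {0..<d} (Jset n))"
definition ze :: "nat \<Rightarrow> complex" where "ze r = om n (e r)"
definition M where "M = cyclo n ^ k"

lemma n0: "n > 0" using n by simp

lemma e_bij: "bij_betw e {0..<d} (Jset n)"
proof -
  have "\<exists>h. bij_betw h {0..<d} (Jset n)" unfolding d_def by (rule ex_bij_betw_nat_finite, simp)
  thus ?thesis unfolding e_def by (rule someI_ex)
qed

lemma e_in: "r < d \<Longrightarrow> e r \<in> Jset n" using e_bij by (auto simp: bij_betw_def)
lemma e_lt: "r < d \<Longrightarrow> e r < n" using e_in unfolding Jset_def by auto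
lemma e_inj: "r < d \<Longrightarrow> r' < d \<Longrightarrow> e r = e r' \<Longrightarrow> r = r'"
  using e_bij by (auto simp: bij_betw_def inj_on_def)

lemma d_pos: "d > 0"
proof -
  have "d = totient n" unfolding d_def using card_Jset n0 by simp
  thus ?thesis using n0 by simp
qed

lemma N_pos: "N > 0" unfolding N_def using d_pos k by simp

lemma ze_inj: "r < d \<Longrightarrow> r' < d \<Longrightarrow> ze r = ze r' \<Longrightarrow> r = r'"
  unfolding ze_def using om_inj e_lt e_inj by metis

lemma ze_inj_on: "inj_on ze {0..<d}" using ze_inj by (auto simp: inj_on_def)

lemma cyclo_ze: "of_int_poly (cyclo n) = (\<Prod>r<d. [:- ze r, 1:])"
proof -
  have "of_int_poly (cyclo n) = (\<Prod>j\<in>Jset n. [:- om n j, 1:])" using cyclo_prop[OF n0] unfolding Cprod_def .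
  also have "\<dots> = (\<Prod>r\<in>{0..<d}. [:- om n (e r), 1:])" by (rule prod.reindex_bij_betw[OF e_bij, symmetric])
  finally show ?thesis unfolding ze_def by (simp add: atLeast0LessThan)
qed

lemma M_ze: "of_int_poly M = (\<Prod>r<d. [:- ze r, 1:] ^ k)"
  unfolding M_def of_int_poly_hom.hom_power cyclo_ze by (simp add: prod_power_distrib)

lemma M_ze': "(of_int_poly M :: complex poly) = (\<Prod>s\<in>ze ` {0..<d}. [:- s, 1:] ^ k)"
proof -
  have "(\<Prod>s\<in>ze ` {0..<d}. [:- s, 1:] ^ k) = (\<Prod>r\<in>{0..<d}. [:- ze r, 1:] ^ k)"
    by (rule prod.reindex[OF ze_inj_on, unfolded comp_def])
  thus ?thesis unfolding M_ze by (simp add: atLeast0LessThan)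
qed

lemma lead_M: "lead_coeff M = 1"
proof -
  have "lead_coeff (of_int_poly M :: complex poly) = 1" unfolding M_ze by (simp add: lead_coeff_prod lead_coeff_power)
  thus ?thesis by simp
qed

lemma degree_M: "degree M = N"
proof -
  have "degree (of_int_poly M :: complex poly) = N" unfolding M_ze N_def
    by (subst degree_prod_eq_sum_degree, auto simp: degree_power_eq)
  thus ?thesis by simp
qed

lemma M0: "M \<noteq> 0" using lead_M by auto

lemma Mdvd_iff: "M dvd X \<longleftrightarrow> (\<forall>r<d. \<forall>j<k. tc (ze r) j (of_int_poly X) = 0)"
proof
  assume "M dvd X"
  hence md: "(of_int_poly M :: complex poly) dvd of_int_poly X" by (rule of_int_poly_hom.hom_dvd)
  show "\<forall>r<d. \<forall>j<k. tc (ze r) j (of_int_poly X) = 0"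
  proof (intro allI impI)
    fix r j assume r: "r < d" and j: "j < k"
    have "[:- ze r, 1:] ^ k dvd (of_int_poly M :: complex poly)" unfolding M_ze
      by (rule dvd_prodI, use r in auto)
    from dvd_trans[OF this md] show "tc (ze r) j (of_int_poly X) = 0" by (rule tc_dvd[OF _ j])
  qed
next
  assume H: "\<forall>r<d. \<forall>j<k. tc (ze r) j (of_int_poly X) = 0"
  show "M dvd X"
  proof (cases "X = 0")
    case True thus ?thesis by simp
  next
    case False
    hence X0: "(of_int_poly X :: complex poly) \<noteq> 0" by simp
    have "(of_int_poly M :: complex poly) dvd of_int_poly X" unfolding M_ze'
    proof (rule linear_prod_dvd[OF _ X0])
      show "\<forall>s\<in>ze ` {0..<d}. [:- s, 1:] ^ k dvd of_int_poly X"
      proof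
        fix s assume "s \<in> ze ` {0..<d}"
        then obtain r where r: "r < d" "s = ze r" by auto
        show "[:- s, 1:] ^ k dvd of_int_poly X" unfolding r(2) by (rule tc_zero_dvd, use H r in auto)
      qed
    qed simp
    thus ?thesis by (rule dvd_transfer[OF lead_M])
  qed
qed

definition sig :: "nat \<Rightarrow> nat" where
  "sig r = inv_into {0..<d} e (e r * b mod n)"

lemma sig_props: assumes r: "r < d" shows "sig r < d" "ze (sig r) = ze r ^ b"
proof -
  have "coprime (e r) n" using e_in[OF r] unfolding Jset_def by auto
  hence "coprime (e r * b) n" using cop by simp
  hence "coprime (e r * b mod n) n" using n0 by (simp add: coprime_mod_left_iff)
  moreover have "e r * b mod n < n" using n0 by simp
  ultimately have J: "e r * b mod n \<in> Jset n" unfolding Jset_def by simp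
  have "inv_into {0..<d} e (e r * b mod n) \<in> {0..<d}" using e_bij J
    by (metis bij_betw_def inv_into_into)
  thus "sig r < d" unfolding sig_def by simp
  have "e (sig r) = e r * b mod n" unfolding sig_def using e_bij J
    by (metis bij_betw_def f_inv_into_f)
  thus "ze (sig r) = ze r ^ b" unfolding ze_def om_power using om_mod[OF n0] by simp
qed

lemma sig_inj: assumes r: "r < d" and r': "r' < d" and eq: "sig r = sig r'" shows "r = r'"
proof -
  have "ze r ^ b = ze r' ^ b" using sig_props[OF r] sig_props[OF r'] eq by simp
  hence "om n ((e r * b) mod n) = om n ((e r' * b) mod n)" unfolding ze_def om_power om_mod[OF n0] .
  hence "(e r * b) mod n = (e r' * b) mod n" by (rule om_inj[rotated 2], use n0 in auto)
  hence "[e r * b = e r' * b] (mod n)" by (simp add: cong_def)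
  hence "[e r = e r'] (mod n)" using cop by (simp add: cong_mult_rcancel_nat coprime_commute)
  hence "e r = e r'" using e_lt[OF r] e_lt[OF r'] by (simp add: cong_def)
  thus ?thesis using e_inj r r' by simp
qed

lemma frob_tc: "tc (ze r) j (of_int_poly (frob b X)) =
   (\<Sum>i\<le>j. tc (ze (sig r)) i (of_int_poly X) * tc (ze r) j ((monom 1 b - [:ze r ^ b:]) ^ i))"
  if "r < d" for r
proof -
  have "tc (ze r) j (of_int_poly (frob b X)) = tc (ze r) j (pcompose (of_int_poly X) (monom 1 b))"
    unfolding frob_def by (simp add: of_int_hom.map_poly_pcompose)
  also have "\<dots> = (\<Sum>i\<le>j. tc (poly (monom 1 b) (ze r)) i (of_int_poly X) *
      tc (ze r) j ((monom 1 b - [:poly (monom 1 b) (ze r):]) ^ i))" by (rule tc_chain)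
  finally show ?thesis using sig_props[OF that] by (simp add: poly_monom)
qed

lemma conj1: assumes "M dvd X" shows "M dvd frob b X"
proof -
  have H: "\<forall>r<d. \<forall>j<k. tc (ze r) j (of_int_poly X) = 0" using assms Mdvd_iff by blast
  show ?thesis unfolding Mdvd_iff
  proof (intro allI impI)
    fix r j assume r: "r < d" and j: "j < k"
    show "tc (ze r) j (of_int_poly (frob b X)) = 0" unfolding frob_tc[OF r]
      by (rule sum.neutral, use H sig_props(1)[OF r] j in auto)
  qed
qed

definition rem :: "int poly \<Rightarrow> int poly" where
  "rem x = (SOME r. M dvd x - r \<and> degree r < N)"

lemma rem_ex: "\<exists>r. M dvd x - r \<and> degree r < N"
proof -
  obtain q r where qr: "x = M * q + r" "r = 0 \<or> degree r < degree M" using monic_divmod[OF lead_M] by blast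
  have "degree r < N" using qr(2) degree_M N_pos by auto
  moreover have "M dvd x - r" using qr(1) by simp
  ultimately show ?thesis by blast
qed

lemma rem: "M dvd x - rem x" "degree (rem x) < N"
  using someI_ex[OF rem_ex[of x]] unfolding rem_def by auto

lemma small_dvd_zero: assumes "degree y < N" "M dvd y" shows "y = 0"
proof (rule ccontr)
  assume "y \<noteq> 0"
  from dvd_imp_degree_le[OF assms(2) this] degree_M assms(1) show False by simp
qed

lemma rem_unique: assumes "M dvd x - r" "degree r < N" shows "rem x = r"
proof -
  have "M dvd (x - r) - (x - rem x)" using assms(1) rem(1) by (rule dvd_diff)
  hence "M dvd rem x - r" by simp
  moreover have "degree (rem x - r) < N" using rem(2) assms(2) by (rule degree_diff_less)
  ultimately have "rem x - r = 0" using small_dvd_zero by blast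
  thus ?thesis by simp
qed

definition lift :: "int vec \<Rightarrow> int poly" where "lift v = (\<Sum>l<N. monom (v $ l) l)"
definition coord :: "int poly \<Rightarrow> int vec" where "coord x = vec N (\<lambda>l. coeff (rem x) l)"

lemma coeff_lift: "coeff (lift v) i = (if i < N then v $ i else 0)"
  unfolding lift_def by (simp add: coeff_sum coeff_monom)

lemma degree_lift: "degree (lift v) < N"
proof -
  have "degree (lift v) \<le> N - 1" by (rule degree_le, auto simp: coeff_lift)
  thus ?thesis using N_pos by simp
qed

lemma small_eqI: assumes "degree x < N" "degree y < N" "\<And>i. i < N \<Longrightarrow> coeff x i = coeff y i"
  shows "x = y"
proof (rule poly_eqI)
  fix i show "coeff x i = coeff y i"
    using assms by (cases "i < N", auto simp: coeff_eq_0)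
qed

lemma lift_coord: "lift (coord x) = rem x"
  by (rule small_eqI[OF degree_lift rem(2)], simp add: coeff_lift coord_def)

lemma rem_small: "degree x < N \<Longrightarrow> rem x = x" by (rule rem_unique, auto)

lemma coord_lift: "v \<in> carrier_vec N \<Longrightarrow> coord (lift v) = v"
  unfolding coord_def rem_small[OF degree_lift] by (intro eq_vecI, auto simp: coeff_lift)

lemma coord_carrier[simp]: "coord x \<in> carrier_vec N" unfolding coord_def by simp

lemma lift_diff: "v \<in> carrier_vec N \<Longrightarrow> w \<in> carrier_vec N \<Longrightarrow> lift (v - w) = lift v - lift w"
  by (rule poly_eqI, simp add: coeff_lift)

lemma rem_diff: "rem (x - y) = rem x - rem y"
proof (rule rem_unique)
  have "M dvd (x - rem x) - (y - rem y)" by (rule dvd_diff[OF rem(1) rem(1)])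
  thus "M dvd x - y - (rem x - rem y)" by (simp add: algebra_simps)
  show "degree (rem x - rem y) < N" by (rule degree_diff_less[OF rem(2) rem(2)])
qed

lemma coord_diff: "coord (x - y) = coord x - coord y"
  unfolding coord_def rem_diff by (intro eq_vecI, auto)

definition h :: "nat \<Rightarrow> int poly" where "h i = rem (monom 1 (b * i))"
definition A :: "int mat" where "A = mat N N (\<lambda>(l,i). coeff (h i) l)"

lemma A_carrier: "A \<in> carrier_mat N N" unfolding A_def by simp

lemma frob_monom: "frob b (monom c l) = monom c (b * l)"
  unfolding frob_def pcompose_monom monom1_power by (simp add: smult_monom)

lemma lift_A: assumes c: "c \<in> carrier_vec N"
  shows "lift (A *\<^sub>v c) = (\<Sum>i<N. Polynomial.smult (c $ i) (h i))"
proof (rule poly_eqI)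
  fix l
  show "coeff (lift (A *\<^sub>v c)) l = coeff (\<Sum>i<N. Polynomial.smult (c $ i) (h i)) l"
  proof (cases "l < N")
    case True
    thus ?thesis using c unfolding A_def
      by (simp add: coeff_lift coeff_sum scalar_prod_def atLeast0LessThan mult.commute)
  next
    case False
    have "coeff (h i) l = 0" for i unfolding h_def
      by (rule coeff_eq_0, use rem(2)[of "monom 1 (b * i)"] False in simp)
    thus ?thesis using False by (simp add: coeff_lift coeff_sum)
  qed
qed

lemma frob_lift: assumes c: "c \<in> carrier_vec N"
  shows "M dvd frob b (lift c) - lift (A *\<^sub>v c)"
proof -
  have "frob b (lift c) = (\<Sum>i<N. monom (c $ i) (b * i))"
    unfolding lift_def frob_def pcompose_sum by (simp add: frob_monom[unfolded frob_def])
  hence "frob b (lift c) - lift (A *\<^sub>v c) = (\<Sum>i<N. Polynomial.smult (c $ i) (monom 1 (b * i) - h i))"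
    unfolding lift_A[OF c] by (simp add: sum_subtractf smult_monom smult_diff_right)
  also have "M dvd \<dots>"
  proof (rule dvd_sum)
    fix i show "M dvd Polynomial.smult (c $ i) (monom 1 (b * i) - h i)"
      unfolding h_def using rem(1) by (simp add: dvd_smult)
  qed
  finally show ?thesis .
qed

lemma k0: "k > 0" using k by simp

lemma idx_div: "j < k \<Longrightarrow> (r * k + j) div k = r" using k0 by simp
lemma idx_mod: "j < k \<Longrightarrow> (r * k + j) mod k = j" using k0 by simp
lemma idx_lt: "r < d \<Longrightarrow> j < k \<Longrightarrow> r * k + j < N"
proof -
  assume r: "r < d" and j: "j < k"
  have "r * k + j < r * k + k" using j by simp
  also have "\<dots> = Suc r * k" by simp
  also have "\<dots> \<le> d * k" using r by (intro mult_right_mono, auto)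
  finally show ?thesis unfolding N_def .
qed
lemma m_div: "m < N \<Longrightarrow> m div k < d" unfolding N_def using k0
  by (simp add: less_mult_imp_div_less)
lemma m_mod: "m mod k < k" using k0 by simp
lemma m_decomp: "m = (m div k) * k + m mod k" by simp

lemma idx_bij: "bij_betw (\<lambda>(r,j). r * k + j) ({..<d} \<times> {..<k}) {..<N}"
proof (rule bij_betwI')
  fix x y assume x: "x \<in> {..<d} \<times> {..<k}" and y: "y \<in> {..<d} \<times> {..<k}"
  obtain r j where xe: "x = (r,j)" by (cases x)
  obtain r' j' where ye: "y = (r',j')" by (cases y)
  show "((\<lambda>(r,j). r * k + j) x = (\<lambda>(r,j). r * k + j) y) = (x = y)"
  proof
    assume e: "(\<lambda>(r,j). r * k + j) x = (\<lambda>(r,j). r * k + j) y"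
    hence "r * k + j = r' * k + j'" using xe ye by simp
    hence "(r * k + j) div k = (r' * k + j') div k" "(r * k + j) mod k = (r' * k + j') mod k" by simp_all
    thus "x = y" using idx_div idx_mod x y xe ye by auto
  qed simp
next
  fix x assume "x \<in> {..<d} \<times> {..<k}"
  thus "(\<lambda>(r,j). r * k + j) x \<in> {..<N}" using idx_lt by auto
next
  fix m assume m: "m \<in> {..<N}"
  have "(m div k, m mod k) \<in> {..<d} \<times> {..<k}" using m_div m_mod m by auto
  moreover have "m = (\<lambda>(r,j). r * k + j) (m div k, m mod k)" by simp
  ultimately show "\<exists>x\<in>{..<d} \<times> {..<k}. m = (\<lambda>(r,j). r * k + j) x" by blast
qed

definition pp :: "nat \<Rightarrow> nat" where "pp m = (if m < N then sig (m div k) * k + m mod k else m)"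

lemma pp_lt: "m < N \<Longrightarrow> pp m < N" unfolding pp_def using idx_lt sig_props(1) m_div m_mod by simp
lemma pp_div: "m < N \<Longrightarrow> pp m div k = sig (m div k)" unfolding pp_def using idx_div[OF m_mod] by simp
lemma pp_mod: "m < N \<Longrightarrow> pp m mod k = m mod k" unfolding pp_def using idx_mod[OF m_mod] by simp

lemma pp_permutes: "pp permutes {0..<N}"
proof (rule bij_imp_permutes)
  have inj: "inj_on pp {0..<N}"
  proof (rule inj_onI)
    fix x y assume x: "x \<in> {0..<N}" and y: "y \<in> {0..<N}" and e: "pp x = pp y"
    have "sig (x div k) = sig (y div k)" using pp_div x y e by (metis atLeastLessThan_iff)
    hence "x div k = y div k" using sig_inj m_div x y by auto
    moreover have "x mod k = y mod k" using pp_mod x y e by (metis atLeastLessThan_iff)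
    ultimately show "x = y" by (metis m_decomp)
  qed
  moreover have "pp ` {0..<N} \<subseteq> {0..<N}" using pp_lt by auto
  ultimately have "pp ` {0..<N} = {0..<N}" by (simp add: endo_inj_surj)
  thus "bij_betw pp {0..<N} {0..<N}" using inj by (simp add: bij_betw_def)
  show "\<And>x. x \<notin> {0..<N} \<Longrightarrow> pp x = x" unfolding pp_def by auto
qed

definition V :: "complex mat" where
  "V = mat N N (\<lambda>(m,l). tc (ze (m div k)) (m mod k) (monom 1 l))"
definition Tm :: "complex mat" where
  "Tm = mat N N (\<lambda>(m,m'). if m div k = m' div k \<and> m' mod k \<le> m mod k
     then tc (ze (m div k)) (m mod k) ((monom 1 b - [:ze (m div k) ^ b:]) ^ (m' mod k)) else 0)"
definition Vp :: "complex mat" where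
  "Vp = mat N N (\<lambda>(m,i). V $$ (pp m, i))"

lemma V_carrier: "V \<in> carrier_mat N N" unfolding V_def by simp
lemma Tm_carrier: "Tm \<in> carrier_mat N N" unfolding Tm_def by simp
lemma Vp_carrier: "Vp \<in> carrier_mat N N" unfolding Vp_def by simp

lemma sum_monom_small: fixes p :: "'a::comm_ring_1 poly"
  assumes "degree p < N" shows "(\<Sum>l<N. monom (coeff p l) l) = p"
proof (rule poly_eqI)
  fix i show "coeff (\<Sum>l<N. monom (coeff p l) l) i = coeff p i"
    using assms by (cases "i < N", auto simp: coeff_sum coeff_monom coeff_eq_0)
qed

lemma tc_monom: "tc z j (monom c l) = c * tc z j (monom 1 l)"
  using tc_smult[of z j c "monom 1 l"] by (simp add: smult_monom)

lemma VA_entry: assumes m: "m < N" and i: "i < N"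
  shows "(V * map_mat of_int A) $$ (m,i) = (\<Sum>j'\<le>m mod k. tc (ze (sig (m div k))) j' (monom 1 i) *
      tc (ze (m div k)) (m mod k) ((monom 1 b - [:ze (m div k) ^ b:]) ^ j'))"
proof -
  define r where "r = m div k"
  define j where "j = m mod k"
  have r: "r < d" unfolding r_def using m_div[OF m] .
  have j: "j < k" unfolding j_def using m_mod .
  have "(V * map_mat of_int A) $$ (m,i) = (\<Sum>l<N. tc (ze r) j (monom 1 l) * of_int (coeff (h i) l))"
    using m i V_carrier A_carrier unfolding V_def A_def r_def j_def
    by (simp add: scalar_prod_def atLeast0LessThan)
  also have "\<dots> = tc (ze r) j (\<Sum>l<N. monom (coeff (of_int_poly (h i) :: complex poly) l) l)"
    unfolding tc_sum by (rule sum.cong[OF refl], subst tc_monom, simp add: mult.commute)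
  also have "(\<Sum>l<N. monom (coeff (of_int_poly (h i) :: complex poly) l) l) = of_int_poly (h i)"
    by (rule sum_monom_small, unfold h_def, simp add: rem(2))
  also have "tc (ze r) j (of_int_poly (h i)) = tc (ze r) j (of_int_poly (monom 1 (b * i)))"
  proof -
    have "M dvd monom 1 (b * i) - h i" unfolding h_def by (rule rem(1))
    hence "tc (ze r) j (of_int_poly (monom 1 (b * i) - h i)) = 0" using Mdvd_iff r j by blast
    thus ?thesis by (simp add: of_int_poly_hom.hom_minus tc_diff)
  qed
  also have "of_int_poly (monom 1 (b * i)) = of_int_poly (frob b (monom 1 i))" by (simp add: frob_monom)
  also have "tc (ze r) j \<dots> = (\<Sum>j'\<le>j. tc (ze (sig r)) j' (of_int_poly (monom 1 i)) *
      tc (ze r) j ((monom 1 b - [:ze r ^ b:]) ^ j'))" by (rule frob_tc[OF r])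
  finally show ?thesis unfolding r_def j_def by simp
qed

lemma TVp_entry: assumes m: "m < N" and i: "i < N"
  shows "(Tm * Vp) $$ (m,i) = (\<Sum>j'\<le>m mod k. tc (ze (sig (m div k))) j' (monom 1 i) *
      tc (ze (m div k)) (m mod k) ((monom 1 b - [:ze (m div k) ^ b:]) ^ j'))"
proof -
  define r where "r = m div k"
  define j where "j = m mod k"
  have r: "r < d" unfolding r_def using m_div[OF m] .
  have j: "j < k" unfolding j_def using m_mod .
  define g where "g = (\<lambda>m'. Tm $$ (m, m') * Vp $$ (m', i))"
  have "(Tm * Vp) $$ (m,i) = (\<Sum>m'<N. g m')"
    using m i Tm_carrier Vp_carrier unfolding g_def by (simp add: scalar_prod_def atLeast0LessThan)
  also have "\<dots> = (\<Sum>m'\<in>(\<lambda>j'. r * k + j') ` {..j}. g m')"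
  proof (rule sum.mono_neutral_right)
    show "finite {..<N}" by simp
    show "(\<lambda>j'. r * k + j') ` {..j} \<subseteq> {..<N}" using idx_lt[OF r] j by auto
    show "\<forall>m'\<in>{..<N} - (\<lambda>j'. r * k + j') ` {..j}. g m' = 0"
    proof
      fix m' assume mm: "m' \<in> {..<N} - (\<lambda>j'. r * k + j') ` {..j}"
      have "\<not> (m div k = m' div k \<and> m' mod k \<le> m mod k)"
      proof
        assume c: "m div k = m' div k \<and> m' mod k \<le> m mod k"
        have "m' = r * k + m' mod k" using c unfolding r_def by (metis m_decomp)
        moreover have "m' mod k \<in> {..j}" using c unfolding j_def by simp
        ultimately show False using mm by blast
      qed
      moreover have "m' < N" using mm by simp
      ultimately have "Tm $$ (m, m') = 0" unfolding Tm_def using m by auto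
      thus "g m' = 0" unfolding g_def by simp
    qed
  qed
  also have "\<dots> = (\<Sum>j'\<le>j. g (r * k + j'))"
    by (subst sum.reindex, auto simp: inj_on_def)
  also have "\<dots> = (\<Sum>j'\<le>j. tc (ze (sig r)) j' (monom 1 i) *
      tc (ze r) j ((monom 1 b - [:ze r ^ b:]) ^ j'))"
  proof (rule sum.cong[OF refl])
    fix j' assume j': "j' \<in> {..j}"
    have j'k: "j' < k" using j' j by simp
    have mm: "r * k + j' < N" using idx_lt[OF r j'k] .
    have "Vp $$ (r * k + j', i) = tc (ze (sig r)) j' (monom 1 i)"
      unfolding Vp_def using mm i pp_lt[OF mm] pp_div[OF mm] pp_mod[OF mm] idx_div[OF j'k] idx_mod[OF j'k]
      by (simp add: V_def)
    moreover have "Tm $$ (m, r * k + j') = tc (ze r) j ((monom 1 b - [:ze r ^ b:]) ^ j')"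
      unfolding Tm_def using m mm idx_div[OF j'k] idx_mod[OF j'k] j' unfolding r_def j_def by simp
    ultimately show "g (r * k + j') = tc (ze (sig r)) j' (monom 1 i) *
      tc (ze r) j ((monom 1 b - [:ze r ^ b:]) ^ j')" unfolding g_def by simp
  qed
  finally show ?thesis unfolding r_def j_def .
qed

lemma VA_eq: "V * map_mat of_int A = Tm * Vp"
  by (rule eq_matI, use VA_entry TVp_entry V_carrier A_carrier Tm_carrier Vp_carrier in auto)

end


context cset
begin

lemma det_V: "det V \<noteq> 0"
proof
  assume "det V = 0"
  then obtain v where v: "v \<in> carrier_vec N" "v \<noteq> 0\<^sub>v N" "V *\<^sub>v v = 0\<^sub>v N"
    using det_0_iff_vec_prod_zero[OF V_carrier] by auto
  define P :: "complex poly" where "P = (\<Sum>l<N. monom (v $ l) l)"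
  have cP: "coeff P l = (if l < N then v $ l else 0)" for l unfolding P_def by (simp add: coeff_sum coeff_monom)
  have dP: "degree P < N"
  proof -
    have "degree P \<le> N - 1" by (rule degree_le, auto simp: cP)
    thus ?thesis using N_pos by simp
  qed
  have tcP: "tc (ze r) j P = 0" if r: "r < d" and j: "j < k" for r j
  proof -
    have mm: "r * k + j < N" by (rule idx_lt[OF r j])
    have "tc (ze r) j P = (\<Sum>l<N. tc (ze r) j (monom 1 l) * v $ l)"
      unfolding P_def tc_sum by (rule sum.cong[OF refl], subst tc_monom, rule mult.commute)
    also have "\<dots> = (\<Sum>l<N. V $$ (r * k + j, l) * v $ l)"
      by (rule sum.cong[OF refl], use mm in \<open>simp add: V_def idx_div[OF j] idx_mod[OF j] j\<close>)
    also have "\<dots> = (V *\<^sub>v v) $ (r * k + j)"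
      using mm v(1) V_carrier by (simp add: scalar_prod_def atLeast0LessThan)
    also have "\<dots> = 0" using v(3) mm by simp
    finally show ?thesis .
  qed
  have "P = 0"
  proof (rule ccontr)
    assume P0: "P \<noteq> 0"
    have "(of_int_poly M :: complex poly) dvd P" unfolding M_ze'
    proof (rule linear_prod_dvd[OF _ P0])
      show "\<forall>s\<in>ze ` {0..<d}. [:- s, 1:] ^ k dvd P"
      proof
        fix s assume "s \<in> ze ` {0..<d}"
        then obtain r where r: "r < d" "s = ze r" by auto
        show "[:- s, 1:] ^ k dvd P" unfolding r(2) by (rule tc_zero_dvd, use tcP r in auto)
      qed
    qed simp
    from dvd_imp_degree_le[OF this P0] have "N \<le> degree P" using degree_M by simp
    with dP show False by simp
  qed
  hence "v = 0\<^sub>v N" using cP v(1) by (intro eq_vecI, auto) (metis coeff_0)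
  with v(2) show False by simp
qed

lemma det_Tm: "det Tm = (\<Prod>m<N. (of_nat b * ze (m div k) ^ (b - 1)) ^ (m mod k))"
proof -
  have "det Tm = prod_list (diag_mat Tm)"
  proof (rule det_lower_triangular[OF _ Tm_carrier])
    fix i j assume ij: "i < j" "j < N"
    have "\<not> (i div k = j div k \<and> j mod k \<le> i mod k)"
    proof
      assume c: "i div k = j div k \<and> j mod k \<le> i mod k"
      have "j = (j div k) * k + j mod k" by (rule div_mult_mod_eq[symmetric])
      also have "\<dots> \<le> (i div k) * k + i mod k" using c by (metis add_left_mono)
      also have "\<dots> = i" by (rule div_mult_mod_eq)
      finally show False using ij by simp
    qed
    thus "Tm $$ (i,j) = 0" unfolding Tm_def using ij by auto
  qed
  also have "\<dots> = (\<Prod>m = 0..<N. Tm $$ (m,m))" unfolding prod_list_diag_prod using Tm_carrier by simp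
  also have "\<dots> = (\<Prod>m<N. (of_nat b * ze (m div k) ^ (b - 1)) ^ (m mod k))"
    by (rule prod.cong, simp add: atLeast0LessThan, simp add: Tm_def tc_diag)
  finally show ?thesis .
qed

lemma norm_ze: "norm (ze r) = 1" unfolding ze_def om_def by simp

lemma sum_mod: "(\<Sum>m<N. m mod k) = d * (\<Sum>j<k. j)"
proof -
  have "(\<Sum>m<N. m mod k) = (\<Sum>x\<in>{..<d} \<times> {..<k}. (\<lambda>(r,j). r * k + j) x mod k)"
    by (rule sum.reindex_bij_betw[OF idx_bij, symmetric])
  also have "\<dots> = (\<Sum>x\<in>{..<d} \<times> {..<k}. snd x)" by (rule sum.cong, auto simp: idx_mod)
  also have "\<dots> = (\<Sum>r<d. \<Sum>j<k. j)" unfolding sum.cartesian_product by (simp add: split_def)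
  also have "\<dots> = d * (\<Sum>j<k. j)" by simp
  finally show ?thesis .
qed

lemma gauss2: "2 * (\<Sum>j<k'. j) = k' * (k' - 1 :: nat)"
  by (induction k', auto simp: algebra_simps)

lemma det_A: "real_of_int \<bar>det A\<bar> = real b ^ (\<Sum>m<N. m mod k)"
proof -
  have "det V * of_int (det A) = det V * det (map_mat of_int A)" by (simp add: of_int_hom.hom_det)
  also have "\<dots> = det (V * map_mat of_int A)" using V_carrier A_carrier by (simp add: det_mult)
  also have "\<dots> = det (Tm * Vp)" unfolding VA_eq ..
  also have "\<dots> = det Tm * det Vp" using Tm_carrier Vp_carrier by (simp add: det_mult)
  also have "det Vp = signof pp * det V" unfolding Vp_def by (rule det_permute_rows[OF V_carrier pp_permutes])
  finally have e: "det V * of_int (det A) = det Tm * (signof pp * det V)" .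
  hence "det V * of_int (det A) = det V * (det Tm * signof pp)" by (simp only: mult_ac)
  hence "of_int (det A) = det Tm * signof pp" using det_V by simp
  hence "norm (of_int (det A) :: complex) = norm (det Tm) * norm (signof pp :: complex)" by (simp add: norm_mult)
  moreover have "norm (signof pp :: complex) = 1"
    by (cases pp rule: sign_cases, simp_all)
  moreover have "norm (det Tm) = (\<Prod>m<N. real b ^ (m mod k))"
    unfolding det_Tm prod_norm[symmetric]
    by (rule prod.cong[OF refl], simp only: norm_mult norm_power norm_ze norm_of_nat power_one mult_1_right)
  ultimately have "real_of_int \<bar>det A\<bar> = (\<Prod>m<N. real b ^ (m mod k))" by simp
  thus ?thesis by (simp add: power_sum)
qed

end


context cset
begin

definition S where "S = {frob b p + cyclo n ^ k * r | p r. True}"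

lemma frob_diff: "frob b (p - q) = frob b p - frob b q" unfolding frob_def by (simp add: pcompose_diff)

lemma coord_rem: "rem x = rem y \<Longrightarrow> coord x = coord y" unfolding coord_def by simp

lemma detA_nz: "det A \<noteq> 0"
proof -
  have "real_of_int \<bar>det A\<bar> > 0" unfolding det_A using b by simp
  thus ?thesis by auto
qed

lemma in_lat: "c \<in> carrier_vec N \<Longrightarrow> A *\<^sub>v c \<in> lat A"
  unfolding lat_def using A_carrier by auto

lemma S_iff: "x \<in> S \<longleftrightarrow> coord x \<in> lat A"
proof
  assume "x \<in> S"
  then obtain p r where x: "x = frob b p + M * r" unfolding S_def M_def by auto
  define c where "c = coord p"
  have c: "c \<in> carrier_vec N" unfolding c_def by simp
  have "M dvd p - lift c" unfolding c_def lift_coord by (rule rem(1))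
  hence "M dvd frob b (p - lift c)" by (rule conj1)
  hence d1: "M dvd frob b p - frob b (lift c)" by (simp add: frob_diff)
  have d2: "M dvd frob b (lift c) - lift (A *\<^sub>v c)" by (rule frob_lift[OF c])
  have "M dvd (frob b p - frob b (lift c)) + (frob b (lift c) - lift (A *\<^sub>v c)) + M * r"
    using d1 d2 by (intro dvd_add, auto)
  hence "M dvd x - lift (A *\<^sub>v c)" unfolding x by (simp add: algebra_simps)
  hence "rem x = lift (A *\<^sub>v c)" by (rule rem_unique[OF _ degree_lift])
  hence "coord x = coord (lift (A *\<^sub>v c))" using rem_small[OF degree_lift] by (intro coord_rem, simp)
  also have "\<dots> = A *\<^sub>v c" using A_carrier c by (intro coord_lift, simp)
  finally show "coord x \<in> lat A" using in_lat[OF c] by simp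
next
  assume "coord x \<in> lat A"
  then obtain c where c: "c \<in> carrier_vec N" "coord x = A *\<^sub>v c" unfolding lat_def using A_carrier by auto
  have "rem x = lift (A *\<^sub>v c)" using lift_coord[of x] c(2) by simp
  hence d1: "M dvd x - lift (A *\<^sub>v c)" using rem(1)[of x] by simp
  have d2: "M dvd frob b (lift c) - lift (A *\<^sub>v c)" by (rule frob_lift[OF c(1)])
  have "M dvd (x - lift (A *\<^sub>v c)) - (frob b (lift c) - lift (A *\<^sub>v c))" using d1 d2 by (rule dvd_diff)
  moreover have "(x - lift (A *\<^sub>v c)) - (frob b (lift c) - lift (A *\<^sub>v c)) = x - frob b (lift c)" by simp
  ultimately have "M dvd x - frob b (lift c)" by simp
  then obtain q where "x - frob b (lift c) = M * q" by (elim dvdE)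
  hence "x = frob b (lift c) + cyclo n ^ k * q" unfolding M_def by (simp add: algebra_simps)
  thus "x \<in> S" unfolding S_def by blast
qed

lemma S_diff: "x \<in> S \<Longrightarrow> y \<in> S \<Longrightarrow> x - y \<in> S"
  unfolding S_iff coord_diff using lat_diff[OF A_carrier] by blast

lemma S_zero: "0 \<in> S" unfolding S_def by (auto simp: frob_def intro!: exI[of _ 0])

lemma S_add: "x \<in> S \<Longrightarrow> y \<in> S \<Longrightarrow> x + y \<in> S"
  using S_diff[OF _ S_diff[OF S_zero]] by (metis diff_0 diff_minus_eq_add)

lemma coset_eq: "((\<lambda>s. x + s) ` S = (\<lambda>s. y + s) ` S) \<longleftrightarrow> x - y \<in> S"
proof
  assume e: "(\<lambda>s. x + s) ` S = (\<lambda>s. y + s) ` S"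
  have "x \<in> (\<lambda>s. x + s) ` S" using S_zero by force
  then obtain s where "s \<in> S" "x = y + s" unfolding e by auto
  thus "x - y \<in> S" by simp
next
  assume xy: "x - y \<in> S"
  have yx: "y - x \<in> S" using S_diff[OF S_zero xy] by simp
  show "(\<lambda>s. x + s) ` S = (\<lambda>s. y + s) ` S"
  proof (rule equalityI; rule subsetI)
    fix z assume "z \<in> (\<lambda>s. x + s) ` S"
    then obtain s where s: "s \<in> S" "z = x + s" by auto
    have "z = y + ((x - y) + s)" using s by simp
    moreover have "(x - y) + s \<in> S" using S_add[OF xy s(1)] .
    ultimately show "z \<in> (\<lambda>s. y + s) ` S" by blast
  next
    fix z assume "z \<in> (\<lambda>s. y + s) ` S"
    then obtain s where s: "s \<in> S" "z = y + s" by auto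
    have "z = x + ((y - x) + s)" using s by simp
    moreover have "(y - x) + s \<in> S" using S_add[OF yx s(1)] .
    ultimately show "z \<in> (\<lambda>s. x + s) ` S" by blast
  qed
qed

lemma card_cosets: "card ((\<lambda>x. (\<lambda>s. x + s) ` S) ` UNIV) = nat \<bar>det A\<bar>"
proof -
  obtain R where R: "finite R" "card R = nat \<bar>det A\<bar>" "reps N A R"
    using lattice_index[OF A_carrier detA_nz] by blast
  have Rc: "R \<subseteq> carrier_vec N" and Rex: "\<forall>v\<in>carrier_vec N. \<exists>r\<in>R. v - r \<in> lat A"
    and Run: "\<forall>r1\<in>R. \<forall>r2\<in>R. r1 - r2 \<in> lat A \<longrightarrow> r1 = r2"
    using R(3) unfolding reps_def by auto
  have "bij_betw (\<lambda>v. (\<lambda>s. lift v + s) ` S) R ((\<lambda>x. (\<lambda>s. x + s) ` S) ` UNIV)"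
  proof (rule bij_betw_imageI)
    show "inj_on (\<lambda>v. (\<lambda>s. lift v + s) ` S) R"
    proof (rule inj_onI)
      fix v1 v2 assume v1: "v1 \<in> R" and v2: "v2 \<in> R"
        and e: "(\<lambda>s. lift v1 + s) ` S = (\<lambda>s. lift v2 + s) ` S"
      have "lift v1 - lift v2 \<in> S" using e unfolding coset_eq .
      hence "coord (lift v1 - lift v2) \<in> lat A" unfolding S_iff .
      moreover have "coord (lift v1) = v1" using Rc v1 coord_lift by auto
      moreover have "coord (lift v2) = v2" using Rc v2 coord_lift by auto
      ultimately have "v1 - v2 \<in> lat A" unfolding coord_diff by simp
      thus "v1 = v2" using Run v1 v2 by blast
    qed
    show "(\<lambda>v. (\<lambda>s. lift v + s) ` S) ` R = (\<lambda>x. (\<lambda>s. x + s) ` S) ` UNIV"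
    proof (rule equalityI; rule subsetI)
      fix C assume "C \<in> (\<lambda>v. (\<lambda>s. lift v + s) ` S) ` R"
      thus "C \<in> (\<lambda>x. (\<lambda>s. x + s) ` S) ` UNIV" by auto
    next
      fix C assume "C \<in> (\<lambda>x. (\<lambda>s. x + s) ` S) ` UNIV"
      then obtain x where C: "C = (\<lambda>s. x + s) ` S" by auto
      obtain r where r: "r \<in> R" "coord x - r \<in> lat A" using Rex coord_carrier by blast
      have "coord (x - lift r) = coord x - r" unfolding coord_diff using r(1) Rc coord_lift by auto
      hence "x - lift r \<in> S" unfolding S_iff using r(2) by simp
      hence "C = (\<lambda>s. lift r + s) ` S" unfolding C coset_eq .
      thus "C \<in> (\<lambda>v. (\<lambda>s. lift v + s) ` S) ` R" using r(1) by blast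
    qed
  qed
  hence "card ((\<lambda>x. (\<lambda>s. x + s) ` S) ` UNIV) = card R" by (simp add: bij_betw_same_card)
  thus ?thesis using R(2) by simp
qed

lemma detA_val: "nat \<bar>det A\<bar> = b ^ (k * (k - 1) * totient n div 2)"
proof -
  have tn: "totient n = d" unfolding d_def using card_Jset n0 by simp
  have "k * (k - 1) * totient n div 2 = (2 * (\<Sum>j<k. j)) * d div 2" unfolding gauss2 tn ..
  also have "\<dots> = d * (\<Sum>j<k. j)" by simp
  also have "\<dots> = (\<Sum>m<N. m mod k)" by (simp add: sum_mod)
  finally have E: "k * (k - 1) * totient n div 2 = (\<Sum>m<N. m mod k)" .
  have "real_of_int \<bar>det A\<bar> = real (b ^ (\<Sum>m<N. m mod k))" unfolding det_A by simp
  hence X: "\<bar>det A\<bar> = int (b ^ (\<Sum>m<N. m mod k))" by (metis of_int_eq_iff of_int_of_nat_eq)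
  show ?thesis unfolding E X by (rule nat_int)
qed

end


context cset
begin

definition vl :: "int list \<Rightarrow> int vec" where "vl c = vec N (\<lambda>i. c ! i)"

lemma vl_inj: "length c1 = N \<Longrightarrow> length c2 = N \<Longrightarrow> vl c1 = vl c2 \<Longrightarrow> c1 = c2"
proof (rule nth_equalityI)
  fix i assume "length c1 = N" "length c2 = N" "vl c1 = vl c2" "i < length c1"
  hence "vl c1 $ i = vl c2 $ i" by simp
  thus "c1 ! i = c2 ! i" using \<open>i < length c1\<close> \<open>length c1 = N\<close> unfolding vl_def by simp
qed simp

lemma vl_carrier[simp]: "vl c \<in> carrier_vec N" unfolding vl_def by simp

lemma sum_vs: "(\<Sum>i<length (map (\<lambda>i. monom 1 i) [0..<N]). Polynomial.smult (c ! i) (map (\<lambda>i. monom 1 i) [0..<N] ! i))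
   = lift (vl c)"
  unfolding lift_def vl_def by (rule sum.cong, auto simp: smult_monom)

lemma frob_lift_sum: "frob b (lift v) = (\<Sum>i<N. monom (v $ i) (b * i))"
  unfolding lift_def frob_def pcompose_sum by (simp add: frob_monom[unfolded frob_def])

lemma sum_ws: "(\<Sum>i<length (map (\<lambda>i. frob b (monom 1 i)) [0..<N]). Polynomial.smult (c ! i) (map (\<lambda>i. frob b (monom 1 i)) [0..<N] ! i))
   = frob b (lift (vl c))"
  unfolding frob_lift_sum vl_def by (rule sum.cong, auto simp: smult_monom frob_monom)

lemma list_of_coord: "\<exists>c. length c = N \<and> vl c = coord x"
  by (rule exI[of _ "map (\<lambda>i. coord x $ i) [0..<N]"], auto simp: vl_def coord_def intro!: eq_vecI)

lemma vs_basis: "quot_Z_basis M UNIV (map (\<lambda>i. monom 1 i) [0..<N])"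
  unfolding quot_Z_basis_def
proof (intro conjI ballI)
  fix x :: "int poly"
  obtain c where c: "length c = N" "vl c = coord x" using list_of_coord by blast
  show "\<exists>!c. length c = length (map (\<lambda>i. monom 1 i) [0..<N]) \<and>
       M dvd x - (\<Sum>i<length (map (\<lambda>i. monom 1 i) [0..<N]). Polynomial.smult (c ! i) (map (\<lambda>i. monom 1 i) [0..<N] ! i))"
    unfolding sum_vs
  proof (rule ex1I[of _ c])
    show "length c = length (map (\<lambda>i. monom 1 i) [0..<N]) \<and> M dvd x - lift (vl c)"
      using c rem(1)[of x] lift_coord[of x] by simp
  next
    fix c' assume c': "length c' = length (map (\<lambda>i. monom 1 i) [0..<N]) \<and> M dvd x - lift (vl c')"
    have d1: "M dvd x - lift (vl c)" using c rem(1)[of x] lift_coord[of x] by simp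
    have d2: "M dvd x - lift (vl c')" using c' by simp
    have "M dvd (x - lift (vl c)) - (x - lift (vl c'))" by (rule dvd_diff[OF d1 d2])
    hence "M dvd lift (vl c' - vl c)" by (simp add: lift_diff)
    hence "lift (vl c' - vl c) = 0" by (rule small_dvd_zero[OF degree_lift])
    hence "coord (lift (vl c' - vl c)) = coord 0" by simp
    hence "vl c' - vl c = coord 0" by (simp add: coord_lift)
    also have "coord 0 = 0\<^sub>v N" unfolding coord_def using rem_small[of 0] N_pos by (intro eq_vecI, auto)
    finally have z: "vl c' - vl c = 0\<^sub>v N" .
    have "vl c' = vl c"
    proof (rule eq_vecI)
      fix i assume i: "i < dim_vec (vl c)"
      hence iN: "i < N" by (simp add: vl_def)
      have "(vl c' - vl c) $ i = 0\<^sub>v N $ i" by (simp only: z)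
      hence "(vl c' - vl c) $ i = 0" using iN by simp
      thus "vl c' $ i = vl c $ i" using i by simp
    qed (simp add: vl_def)
    thus "c' = c" using c' c vl_inj by simp
  qed
qed simp

lemma vec_diff_zero: assumes "(v :: int vec) \<in> carrier_vec N" "w \<in> carrier_vec N" "v - w = 0\<^sub>v N" shows "v = w"
proof (rule eq_vecI)
  fix i assume i: "i < dim_vec w"
  hence iN: "i < N" using assms(2) by simp
  have "(v - w) $ i = 0\<^sub>v N $ i" by (simp only: assms(3))
  hence "(v - w) $ i = 0" using iN by simp
  thus "v $ i = w $ i" using i by simp
qed (use assms in simp)

lemma ws_basis: "quot_Z_basis M S (map (\<lambda>i. frob b (monom 1 i)) [0..<N])"
  unfolding quot_Z_basis_def
proof (intro conjI ballI)
  show "set (map (\<lambda>i. frob b (monom 1 i)) [0..<N]) \<subseteq> S"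
  proof
    fix y assume "y \<in> set (map (\<lambda>i. frob b (monom 1 i)) [0..<N])"
    then obtain i where y: "y = frob b (monom 1 i)" by auto
    show "y \<in> S" unfolding S_def y by (intro CollectI exI[of _ "monom 1 i"] exI[of _ 0], simp)
  qed
next
  fix x :: "int poly" assume "x \<in> S"
  then obtain p r where x: "x = frob b p + M * r" unfolding S_def M_def by auto
  obtain c where c: "length c = N" "vl c = coord p" using list_of_coord by blast
  show "\<exists>!c. length c = length (map (\<lambda>i. frob b (monom 1 i)) [0..<N]) \<and>
       M dvd x - (\<Sum>i<length (map (\<lambda>i. frob b (monom 1 i)) [0..<N]). Polynomial.smult (c ! i) (map (\<lambda>i. frob b (monom 1 i)) [0..<N] ! i))"
    unfolding sum_ws
  proof (rule ex1I[of _ c])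
    have "M dvd p - lift (vl c)" unfolding c(2) lift_coord by (rule rem(1))
    hence "M dvd frob b (p - lift (vl c))" by (rule conj1)
    hence "M dvd (frob b p - frob b (lift (vl c))) + M * r" unfolding frob_diff by (intro dvd_add, auto)
    hence "M dvd x - frob b (lift (vl c))" unfolding x by (simp add: algebra_simps)
    thus "length c = length (map (\<lambda>i. frob b (monom 1 i)) [0..<N]) \<and> M dvd x - frob b (lift (vl c))"
      using c by simp
  next
    fix c' assume c': "length c' = length (map (\<lambda>i. frob b (monom 1 i)) [0..<N]) \<and> M dvd x - frob b (lift (vl c'))"
    have d1: "M dvd x - frob b (lift (vl c))"
    proof -
      have "M dvd p - lift (vl c)" unfolding c(2) lift_coord by (rule rem(1))
      hence "M dvd frob b (p - lift (vl c))" by (rule conj1)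
      hence "M dvd (frob b p - frob b (lift (vl c))) + M * r" unfolding frob_diff by (intro dvd_add, auto)
      thus ?thesis unfolding x by (simp add: algebra_simps)
    qed
    have d2: "M dvd x - frob b (lift (vl c'))" using c' by simp
    have "M dvd (x - frob b (lift (vl c))) - (x - frob b (lift (vl c')))" by (rule dvd_diff[OF d1 d2])
    moreover have "lift (vl c' - vl c) = lift (vl c') - lift (vl c)" by (rule lift_diff, simp_all)
    hence "frob b (lift (vl c' - vl c)) = frob b (lift (vl c')) - frob b (lift (vl c))" by (simp add: frob_diff)
    hence "(x - frob b (lift (vl c))) - (x - frob b (lift (vl c'))) = frob b (lift (vl c' - vl c))" by simp
    ultimately have d3: "M dvd frob b (lift (vl c' - vl c))" by simp
    define w where "w = vl c' - vl c"
    have w: "w \<in> carrier_vec N" unfolding w_def by simp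
    have d3': "M dvd frob b (lift w)" using d3 unfolding w_def .
    have "M dvd frob b (lift w) - (frob b (lift w) - lift (A *\<^sub>v w))"
      by (rule dvd_diff[OF d3' frob_lift[OF w]])
    hence "M dvd lift (A *\<^sub>v w)" by simp
    hence "lift (A *\<^sub>v w) = 0" by (rule small_dvd_zero[OF degree_lift])
    hence "coord (lift (A *\<^sub>v w)) = coord 0" by simp
    moreover have "coord (lift (A *\<^sub>v w)) = A *\<^sub>v w" by (rule coord_lift, use A_carrier w in simp)
    moreover have "coord 0 = 0\<^sub>v N" unfolding coord_def using rem_small[of 0] N_pos by (intro eq_vecI, auto)
    ultimately have Aw: "A *\<^sub>v w = 0\<^sub>v N" by simp
    have "w = 0\<^sub>v N"
    proof (rule ccontr)
      assume "w \<noteq> 0\<^sub>v N"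
      hence "\<exists>v. v \<in> carrier_vec N \<and> v \<noteq> 0\<^sub>v N \<and> A *\<^sub>v v = 0\<^sub>v N" using w Aw by blast
      hence "det A = 0" by (simp only: det_0_iff_vec_prod_zero[OF A_carrier])
      with detA_nz show False by simp
    qed
    hence "vl c' = vl c" unfolding w_def by (rule vec_diff_zero[OF vl_carrier vl_carrier])
    thus "c' = c" using c' c vl_inj by simp
  qed
qed

lemma final: "(\<forall>p p'. M dvd (p - p') \<longrightarrow> M dvd (frob b p - frob b p'))
    \<and> (\<exists>m. (\<exists>vs. length vs = m \<and> quot_Z_basis M UNIV vs)
          \<and> (\<exists>ws. length ws = m \<and> quot_Z_basis M S ws))
    \<and> card ((\<lambda>x. (\<lambda>s. x + s) ` S) ` UNIV) = b ^ (k * (k - 1) * totient n div 2)"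
proof (intro conjI allI impI)
  fix p p' assume "M dvd p - p'"
  hence "M dvd frob b (p - p')" by (rule conj1)
  thus "M dvd frob b p - frob b p'" by (simp add: frob_diff)
next
  show "\<exists>m. (\<exists>vs. length vs = m \<and> quot_Z_basis M UNIV vs) \<and> (\<exists>ws. length ws = m \<and> quot_Z_basis M S ws)"
    using vs_basis ws_basis by (intro exI[of _ N] conjI exI[of _ "map (\<lambda>i. monom 1 i) [0..<N]"]
        exI[of _ "map (\<lambda>i. frob b (monom 1 i)) [0..<N]"], auto)
next
  show "card ((\<lambda>x. (\<lambda>s. x + s) ` S) ` UNIV) = b ^ (k * (k - 1) * totient n div 2)"
    using card_cosets detA_val by simp
qed

end

theorem proposition11:
  fixes n k b :: nat
  assumes "n \<ge> 1" and "k \<ge> 1" and "b \<ge> 1" and "coprime b n"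
  defines "M \<equiv> cyclo n ^ k"
    and "S \<equiv> {frob b p + cyclo n ^ k * r | p r. True}"
  shows "(\<forall>p p'. M dvd (p - p') \<longrightarrow> M dvd (frob b p - frob b p'))
    \<and> (\<exists>m. (\<exists>vs. length vs = m \<and> quot_Z_basis M UNIV vs)
          \<and> (\<exists>ws. length ws = m \<and> quot_Z_basis M S ws))
    \<and> card ((\<lambda>x. (\<lambda>s. x + s) ` S) ` UNIV) = b ^ (k * (k - 1) * totient n div 2)"
proof -
  have C: "cset n k b" using assms(1-4) by unfold_locales
  show ?thesis using cset.final[OF C] unfolding cset.M_def[OF C] cset.S_def[OF C] M_def S_def .
qed


end
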